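(* The following queries are traversal-invariant definable over the indicated families: (1) undirected $st$-connectivity, i.e. the class of finite 2-pointed graphs $(G,s,t)$ in which $s$ and $t$ lie in the same connected component, over the family of all finite 2-pointed graphs; (2) the class of all acyclic graphs, over the family of all finite graphs; (3) the class of all bipartite graphs, over the family of all finite graphs; (4) the class of finite linear orders of even size, over the family of all finite linear orders.
   Context: Graphs are finite and undirected. A linear order $<$ of the vertex set of a graph, listing vertices $v_1<\dots<v_n$, is a traversal if for each $i\ge2$: whenever some vertex among $v_1,\dots,v_{i-1}$ has a neighbour outside $\{v_1,\dots,v_{i-1}\}$, $v_i$ has a neighbour among $v_1,\dots,v_{i-1}$ (a visiting order of generic graph search). Equivalently: for all $u<v<w$, $uEw$ implies some $x<v$ has $xEv$. $\Gamma_n$ is the signature with a binary relation symbol $E$ and $n$ constants; an $n$-pointed graph is a graph with $n$ distinguished vertices. A query over a family of structures is an isomorphism-closed subfamily. A $k$-ary interpretation $\pi:\Gamma_n\to K$ consists of a first-order $K$-formula $\partial^\pi(\bar x)$ in a $k$-tuple of variables, a $K$-formula $E^\pi(\bar x,\bar y)$, and for each constant a definition by cases (cases $K$-formulas, values $k$-tuples of $K$-terms). For a $K$-structure $A$, $A^\pi$ is the $\Gamma_n$-structure with domain $\{\bar a\in A^k:A\models\partial^\pi(\bar a)\}$ and symbols interpreted by their translations. $\pi$ is left total from $\mathcal K$ to $\mathcal G'$ if $A^\pi\in\mathcal G'$ for all $A\in\mathcal K$. For a family $\mathcal G'$ of finite $n$-pointed graphs let $\mathcal T$ be the family of expansions $(G,<)$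 with $G\in\mathcal G'$ and $<$ a traversal of $G$. A first-order $\Gamma_n\cup\{<\}$-sentence $\varphi$ is $(\mathcal G',\mathcal T)$-invariant if $(G,<)\models\varphi\iff(H,<')\models\varphi$ whenever $(G,<),(H,<')\in\mathcal T$ and $G\cong H$; then $G\models(\mathfrak T<)\varphi$ means $(G,<)\models\varphi$ for some (equivalently every) traversal $<$. A query $Q$ over a family $\mathcal K$ of $K$-structures is basic traversal-invariant definable if there are $n$, a family $\mathcal G'$ of finite $n$-pointed graphs, a $(\mathcal G',\mathcal T)$-invariant sentence $\varphi$, and an interpretation $\pi:\Gamma_n\to K$ left total from $\mathcal K$ to $\mathcal G'$, such that for all $A\in\mathcal K$: $A\in Q$ iff $A^\pi\models(\mathfrak T<)\varphi$. $Q$ is traversal-invariant definable if it is a boolean combination of basic traversal-invariant definable queries over $\mathcal K$. *)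

theory Defs
  imports Main
begin

text \<open>A signature is a pair (number of binary relation symbols, number of constant symbols).\<close>

type_synonym sig = "nat \<times> nat"

datatype trm = V nat | C nat

datatype fm = Eq trm trm | R nat trm trm | Neg fm | Conj fm fm | Exi nat fm

record 'a struc =
  univ :: "'a set"
  rel :: "nat \<Rightarrow> 'a \<Rightarrow> 'a \<Rightarrow> bool"
  cst :: "nat \<Rightarrow> 'a"

fun wf_trm :: "sig \<Rightarrow> trm \<Rightarrow> bool" where
  "wf_trm S (V i) = True"
| "wf_trm S (C c) = (c < snd S)"

fun wf_fm :: "sig \<Rightarrow> fm \<Rightarrow> bool" where
  "wf_fm S (Eq t u) = (wf_trm S t \<and> wf_trm S u)"
| "wf_fm S (R r t u) = (r < fst S \<and> wf_trm S t \<and> wf_trm S u)"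
| "wf_fm S (Neg \<phi>) = wf_fm S \<phi>"
| "wf_fm S (Conj \<phi> \<psi>) = (wf_fm S \<phi> \<and> wf_fm S \<psi>)"
| "wf_fm S (Exi x \<phi>) = wf_fm S \<phi>"

fun fvt :: "trm \<Rightarrow> nat set" where
  "fvt (V i) = {i}"
| "fvt (C c) = {}"

fun fv :: "fm \<Rightarrow> nat set" where
  "fv (Eq t u) = fvt t \<union> fvt u"
| "fv (R r t u) = fvt t \<union> fvt u"
| "fv (Neg \<phi>) = fv \<phi>"
| "fv (Conj \<phi> \<psi>) = fv \<phi> \<union> fv \<psi>"
| "fv (Exi x \<phi>) = fv \<phi> - {x}"

definition sentence :: "sig \<Rightarrow> fm \<Rightarrow> bool" where
  "sentence S \<phi> \<longleftrightarrow> wf_fm S \<phi> \<and> fv \<phi> = {}"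

fun evalt :: "('a, 'b) struc_scheme \<Rightarrow> (nat \<Rightarrow> 'a) \<Rightarrow> trm \<Rightarrow> 'a" where
  "evalt A \<sigma> (V i) = \<sigma> i"
| "evalt A \<sigma> (C c) = cst A c"

fun sat :: "('a, 'b) struc_scheme \<Rightarrow> (nat \<Rightarrow> 'a) \<Rightarrow> fm \<Rightarrow> bool" where
  "sat A \<sigma> (Eq t u) = (evalt A \<sigma> t = evalt A \<sigma> u)"
| "sat A \<sigma> (R r t u) = rel A r (evalt A \<sigma> t) (evalt A \<sigma> u)"
| "sat A \<sigma> (Neg \<phi>) = (\<not> sat A \<sigma> \<phi>)"
| "sat A \<sigma> (Conj \<phi> \<psi>) = (sat A \<sigma> \<phi> \<and> sat A \<sigma> \<psi>)"
| "sat A \<sigma> (Exi x \<phi>) = (\<exists>a\<in>univ A. sat A (\<sigma>(x := a)) \<phi>)"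

definition models :: "('a, 'b) struc_scheme \<Rightarrow> fm \<Rightarrow> bool" where
  "models A \<phi> \<longleftrightarrow> (\<forall>\<sigma>. sat A \<sigma> \<phi>)"

text \<open>An n-pointed graph is a Gamma_n-structure (signature (1,n)): relation symbol 0 is E,
  constants 0..n-1 are the distinguished vertices.\<close>

definition is_npgraph :: "nat \<Rightarrow> 'a struc \<Rightarrow> bool" where
  "is_npgraph n G \<longleftrightarrow> finite (univ G) \<and> univ G \<noteq> {} \<and>
     (\<forall>u\<in>univ G. \<forall>v\<in>univ G. rel G 0 u v \<longrightarrow> rel G 0 v u) \<and>
     (\<forall>u\<in>univ G. \<not> rel G 0 u u) \<and>
     (\<forall>c<n. cst G c \<in> univ G)"

definition npiso :: "nat \<Rightarrow> 'a struc \<Rightarrow> 'b struc \<Rightarrow> bool" where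
  "npiso n G H \<longleftrightarrow> (\<exists>f. bij_betw f (univ G) (univ H) \<and>
     (\<forall>u\<in>univ G. \<forall>v\<in>univ G. rel G 0 u v \<longleftrightarrow> rel H 0 (f u) (f v)) \<and>
     (\<forall>c<n. f (cst G c) = cst H c))"

definition is_traversal :: "'a struc \<Rightarrow> 'a list \<Rightarrow> bool" where
  "is_traversal G vs \<longleftrightarrow> distinct vs \<and> set vs = univ G \<and>
     (\<forall>i. 0 < i \<longrightarrow> i < length vs \<longrightarrow>
        (\<exists>j<i. \<exists>w\<in>univ G - set (take i vs). rel G 0 (vs ! j) w) \<longrightarrow>
        (\<exists>j<i. rel G 0 (vs ! j) (vs ! i)))"

definition order_of :: "'a list \<Rightarrow> 'a \<Rightarrow> 'a \<Rightarrow> bool" where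
  "order_of vs u v \<longleftrightarrow> (\<exists>i j. i < j \<and> j < length vs \<and> vs ! i = u \<and> vs ! j = v)"

text \<open>The expansion (G,<) is a (Gamma_n plus <)-structure, signature (2,n); symbol 1 is <.\<close>
definition expand :: "'a struc \<Rightarrow> 'a list \<Rightarrow> 'a struc" where
  "expand G vs = G\<lparr>rel := (rel G)(1 := order_of vs)\<rparr>"

definition trav_invariant :: "nat \<Rightarrow> 'a struc set \<Rightarrow> fm \<Rightarrow> bool" where
  "trav_invariant n GG \<phi> \<longleftrightarrow>
     (\<forall>G\<in>GG. \<forall>H\<in>GG. \<forall>vs ws. is_traversal G vs \<longrightarrow> is_traversal H ws \<longrightarrow> npiso n G H \<longrightarrow>
        (models (expand G vs) \<phi> \<longleftrightarrow> models (expand H ws) \<phi>))"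

definition trav_models :: "'a struc \<Rightarrow> fm \<Rightarrow> bool" where
  "trav_models G \<phi> \<longleftrightarrow> (\<exists>vs. is_traversal G vs \<and> models (expand G vs) \<phi>)"

record interp =
  arity :: nat
  dfm :: fm
  efm :: fm
  cdefs :: "nat \<Rightarrow> (fm \<times> trm list) list"

text \<open>The k-tuple of variables x-bar is x_0,...,x_{k-1}; y-bar is x_k,...,x_{2k-1}.
  Each constant c < n is given by a definition by cases: a list of (case sentence, k-tuple of
  closed terms); its value is the tuple of the first case that holds.\<close>

definition wf_interp :: "sig \<Rightarrow> nat \<Rightarrow> interp \<Rightarrow> bool" where
  "wf_interp K n \<pi> \<longleftrightarrow>
     wf_fm K (dfm \<pi>) \<and> fv (dfm \<pi>) \<subseteq> {..<arity \<pi>} \<and>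
     wf_fm K (efm \<pi>) \<and> fv (efm \<pi>) \<subseteq> {..<2 * arity \<pi>} \<and>
     (\<forall>c<n. \<forall>(\<psi>, ts)\<in>set (cdefs \<pi> c). sentence K \<psi> \<and> length ts = arity \<pi> \<and>
        (\<forall>t\<in>set ts. wf_trm K t \<and> fvt t = {}))"

definition tup :: "'a list \<Rightarrow> nat \<Rightarrow> 'a" where
  "tup xs i = xs ! i"

definition apply_interp :: "interp \<Rightarrow> 'a struc \<Rightarrow> 'a list struc" where
  "apply_interp \<pi> A =
     \<lparr> univ = {xs. length xs = arity \<pi> \<and> set xs \<subseteq> univ A \<and> sat A (tup xs) (dfm \<pi>)},
       rel = (\<lambda>r xs ys. r = 0 \<and> sat A (tup (xs @ ys)) (efm \<pi>)),
       cst = (\<lambda>c. case find (\<lambda>p. models A (fst p)) (cdefs \<pi> c) of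
                    Some p \<Rightarrow> map (evalt A (\<lambda>i. undefined)) (snd p)
                  | None \<Rightarrow> undefined) \<rparr>"

definition interp_defined :: "nat \<Rightarrow> interp \<Rightarrow> 'a struc \<Rightarrow> bool" where
  "interp_defined n \<pi> A \<longleftrightarrow> (\<forall>c<n. \<exists>p\<in>set (cdefs \<pi> c). models A (fst p))"

definition left_total :: "nat \<Rightarrow> interp \<Rightarrow> 'a struc set \<Rightarrow> 'a list struc set \<Rightarrow> bool" where
  "left_total n \<pi> KK GG \<longleftrightarrow> (\<forall>A\<in>KK. interp_defined n \<pi> A \<and> apply_interp \<pi> A \<in> GG)"

definition basic_tid :: "sig \<Rightarrow> 'a struc set \<Rightarrow> 'a struc set \<Rightarrow> bool" where
  "basic_tid K KK Q \<longleftrightarrow> Q \<subseteq> KK \<and>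
     (\<exists>n (GG :: 'a list struc set) \<phi> \<pi>.
        (\<forall>G\<in>GG. is_npgraph n G) \<and>
        sentence (2, n) \<phi> \<and> trav_invariant n GG \<phi> \<and>
        wf_interp K n \<pi> \<and> left_total n \<pi> KK GG \<and>
        (\<forall>A\<in>KK. A \<in> Q \<longleftrightarrow> trav_models (apply_interp \<pi> A) \<phi>))"

inductive tid :: "sig \<Rightarrow> 'a struc set \<Rightarrow> 'a struc set \<Rightarrow> bool" for K KK where
  basic: "basic_tid K KK Q \<Longrightarrow> tid K KK Q"
| compl: "tid K KK Q \<Longrightarrow> tid K KK (KK - Q)"
| inter: "tid K KK Q1 \<Longrightarrow> tid K KK Q2 \<Longrightarrow> tid K KK (Q1 \<inter> Q2)"

definition pointed2_graphs :: "nat struc set" where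
  "pointed2_graphs = {A. is_npgraph 2 A}"

definition edge_set :: "'a struc \<Rightarrow> ('a \<times> 'a) set" where
  "edge_set G = {(u, v). u \<in> univ G \<and> v \<in> univ G \<and> rel G 0 u v}"

definition st_conn :: "nat struc set" where
  "st_conn = {A \<in> pointed2_graphs. (cst A 0, cst A 1) \<in> (edge_set A)\<^sup>*}"

definition finite_graphs :: "nat struc set" where
  "finite_graphs = {A. is_npgraph 0 A}"

definition is_cycle :: "'a struc \<Rightarrow> 'a list \<Rightarrow> bool" where
  "is_cycle G cs \<longleftrightarrow> 3 \<le> length cs \<and> distinct cs \<and> set cs \<subseteq> univ G \<and>
     (\<forall>i<length cs. rel G 0 (cs ! i) (cs ! ((i + 1) mod length cs)))"

definition acyclic_graphs :: "nat struc set" where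
  "acyclic_graphs = {A \<in> finite_graphs. \<not> (\<exists>cs. is_cycle A cs)}"

definition bipartite_graphs :: "nat struc set" where
  "bipartite_graphs = {A \<in> finite_graphs. \<exists>X \<subseteq> univ A.
     \<forall>u\<in>univ A. \<forall>v\<in>univ A. rel A 0 u v \<longrightarrow> (u \<in> X \<longleftrightarrow> v \<notin> X)}"

text \<open>Finite (nonempty) strict linear orders, signature (1,0): relation symbol 0 is <.\<close>
definition linear_orders :: "nat struc set" where
  "linear_orders = {A. finite (univ A) \<and> univ A \<noteq> {} \<and>
     (\<forall>x\<in>univ A. \<not> rel A 0 x x) \<and>
     (\<forall>x\<in>univ A. \<forall>y\<in>univ A. \<forall>z\<in>univ A. rel A 0 x y \<longrightarrow> rel A 0 y z \<longrightarrow> rel A 0 x z) \<and>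
     (\<forall>x\<in>univ A. \<forall>y\<in>univ A. x = y \<or> rel A 0 x y \<or> rel A 0 y x)}"

definition even_linear_orders :: "nat struc set" where
  "even_linear_orders = {A \<in> linear_orders. even (card (univ A))}"

end

theory Submission
  imports Defs "HOL-Library.Transitive_Closure_Table"
begin

section \<open>FO basics\<close>

lemma evalt_fv: "(\<forall>i\<in>fvt t. \<sigma> i = \<tau> i) \<Longrightarrow> evalt A \<sigma> t = evalt A \<tau> t"
  by (cases t) auto

lemma sat_fv: "(\<forall>i\<in>fv \<phi>. \<sigma> i = \<tau> i) \<Longrightarrow> sat A \<sigma> \<phi> = sat A \<tau> \<phi>"
proof (induction \<phi> arbitrary: \<sigma> \<tau>)
  case (Eq t u) then show ?case using evalt_fv[of t \<sigma> \<tau> A] evalt_fv[of u \<sigma> \<tau> A] by auto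
next
  case (R r t u) then show ?case using evalt_fv[of t \<sigma> \<tau> A] evalt_fv[of u \<sigma> \<tau> A] by auto
next
  case (Neg \<phi>) then show ?case by auto
next
  case (Conj \<phi> \<psi>)
  have "sat A \<sigma> \<phi> = sat A \<tau> \<phi>" "sat A \<sigma> \<psi> = sat A \<tau> \<psi>"
    using Conj.prems by (intro Conj.IH; auto)+
  then show ?case by simp
next
  case (Exi x \<phi>)
  have "\<And>a. sat A (\<sigma>(x := a)) \<phi> = sat A (\<tau>(x := a)) \<phi>"
    using Exi by (intro Exi.IH) auto
  then show ?case by simp
qed

lemma models_sentence:
  assumes "fv \<phi> = {}"
  shows "models A \<phi> \<longleftrightarrow> sat A \<sigma> \<phi>"
  unfolding models_def using sat_fv[of \<phi> \<sigma> _ A] assms by auto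

lemma sat_iso:
  fixes A :: "('a, 'c) struc_scheme" and B :: "('b, 'd) struc_scheme"
  assumes bij: "bij_betw f (univ A) (univ B)"
    and rels: "\<And>r a b. r < nr \<Longrightarrow> a \<in> univ A \<Longrightarrow> b \<in> univ A \<Longrightarrow> rel A r a b \<longleftrightarrow> rel B r (f a) (f b)"
    and csts: "\<And>c. c < nc \<Longrightarrow> cst A c \<in> univ A \<and> f (cst A c) = cst B c"
    and wf: "wf_fm (nr, nc) \<phi>"
    and \<sigma>: "\<And>i. \<sigma> i \<in> univ A"
  shows "sat A \<sigma> \<phi> \<longleftrightarrow> sat B (f \<circ> \<sigma>) \<phi>"
  using wf \<sigma>
proof (induction \<phi> arbitrary: \<sigma>)
  have ev: "wf_trm (nr, nc) t \<Longrightarrow> (\<And>i. \<sigma> i \<in> univ A) \<Longrightarrow> evalt A \<sigma> t \<in> univ A \<and> evalt B (f \<circ> \<sigma>) t = f (evalt A \<sigma> t)" for t \<sigma>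
    using csts by (cases t) auto
  have inj: "inj_on f (univ A)" using bij bij_betw_def by blast
  {
    case (Eq t u)
    then show ?case using ev[of t \<sigma>] ev[of u \<sigma>] inj by (simp add: o_def inj_on_eq_iff)
  next
    case (R r t u)
    then show ?case using ev[of t \<sigma>] ev[of u \<sigma>] rels by (simp add: o_def)
  next
    case (Neg \<phi>) then show ?case by auto
  next
    case (Conj \<phi> \<psi>) then show ?case by auto
  next
    case (Exi x \<phi>)
    have "sat A (\<sigma>(x := a)) \<phi> \<longleftrightarrow> sat B ((f \<circ> \<sigma>)(x := f a)) \<phi>" if "a \<in> univ A" for a
    proof -
      have eq: "(f \<circ> \<sigma>)(x := f a) = f \<circ> (\<sigma>(x := a))" by auto
      have "sat A (\<sigma>(x := a)) \<phi> \<longleftrightarrow> sat B (f \<circ> (\<sigma>(x := a))) \<phi>"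
        using Exi.prems that by (intro Exi.IH) auto
      then show ?thesis by (simp only: eq)
    qed
    moreover have "univ B = f ` univ A" using bij by (simp add: bij_betw_def)
    ultimately show ?case by (auto simp: o_def)
  }
qed

section \<open>Traversals\<close>

lemma order_of_nth:
  assumes "distinct vs" "i < length vs" "j < length vs"
  shows "order_of vs (vs ! i) (vs ! j) \<longleftrightarrow> i < j"
proof
  assume "order_of vs (vs ! i) (vs ! j)"
  then obtain i' j' where "i' < j'" "j' < length vs" "vs ! i' = vs ! i" "vs ! j' = vs ! j"
    unfolding order_of_def by blast
  moreover have "i' = i" "j' = j" using calculation assms by (metis nth_eq_iff_index_eq order.strict_trans)+
  ultimately show "i < j" by simp
next
  assume "i < j" then show "order_of vs (vs ! i) (vs ! j)" unfolding order_of_def using assms by blast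
qed

lemma traversal_transport:
  assumes tr: "is_traversal G vs"
    and bij: "bij_betw f (univ G) (univ H)"
    and e: "\<And>a b. a \<in> univ G \<Longrightarrow> b \<in> univ G \<Longrightarrow> rel G 0 a b \<longleftrightarrow> rel H 0 (f a) (f b)"
  shows "is_traversal H (map f vs)"
proof -
  have d: "distinct vs" and s: "set vs = univ G" using tr by (auto simp: is_traversal_def)
  have inj: "inj_on f (univ G)" and im: "f ` univ G = univ H" using bij by (auto simp: bij_betw_def)
  have trc: "\<forall>i. 0 < i \<longrightarrow> i < length vs \<longrightarrow> (\<exists>j<i. \<exists>w\<in>univ G - set (take i vs). rel G 0 (vs ! j) w) \<longrightarrow> (\<exists>j<i. rel G 0 (vs ! j) (vs ! i))"
      using tr unfolding is_traversal_def by blast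
  show ?thesis unfolding is_traversal_def
  proof (intro conjI allI impI)
  show "distinct (map f vs)" using d inj s by (simp add: distinct_map)
  show "set (map f vs) = univ H" using s im by simp
  fix i assume i: "0 < i" "i < length (map f vs)" and ex: "\<exists>j<i. \<exists>w\<in>univ H - set (take i (map f vs)). rel H 0 (map f vs ! j) w"
  show "\<exists>j<i. rel H 0 (map f vs ! j) (map f vs ! i)"
  proof -
    obtain j w where j: "j < i" and w: "w \<in> univ H" "w \<notin> set (take i (map f vs))" and r: "rel H 0 (map f vs ! j) w"
      using ex by blast
    obtain w' where w': "w' \<in> univ G" "w = f w'" using w(1) im by blast
    have nw: "w' \<notin> set (take i vs)"
    proof
      assume "w' \<in> set (take i vs)"
      then have "f w' \<in> set (take i (map f vs))" by (simp add: take_map)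
      then show False using w w' by simp
    qed
    have jl: "j < length vs" using j i by simp
    have vj: "vs ! j \<in> univ G" using jl s nth_mem by blast
    moreover have "rel G 0 (vs ! j) w'" using e[OF vj w'(1)] r w' jl by simp
    ultimately have "\<exists>j<i. \<exists>w\<in>univ G - set (take i vs). rel G 0 (vs ! j) w"
      using j w'(1) nw by blast
    moreover have il: "i < length vs" using i by simp
    ultimately obtain k where k: "k < i" "rel G 0 (vs ! k) (vs ! i)"
      using i(1) trc by blast
    have kl: "k < length vs" using k il by simp
    have "vs ! k \<in> univ G" "vs ! i \<in> univ G" using kl il s nth_mem by blast+
    then have "rel H 0 (f (vs ! k)) (f (vs ! i))" using e k(2) by blast
    then show ?thesis using k(1) kl il by (intro exI[of _ k]) simp
  qed
  qed
qed

lemma order_of_transport: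
  assumes "set vs \<subseteq> U" "inj_on f U" "a \<in> U" "b \<in> U"
  shows "order_of (map f vs) (f a) (f b) \<longleftrightarrow> order_of vs a b"
proof
  assume "order_of (map f vs) (f a) (f b)"
  then obtain i j where ij: "i < j" "j < length vs" "f (vs ! i) = f a" "f (vs ! j) = f b"
    unfolding order_of_def by auto
  moreover have "vs ! i \<in> U" "vs ! j \<in> U" using ij assms(1) by auto
  ultimately have "vs ! i = a" "vs ! j = b" using assms by (auto dest: inj_onD)
  then show "order_of vs a b" using ij unfolding order_of_def by auto
next
  assume "order_of vs a b"
  then obtain i j where "i < j" "j < length vs" "vs ! i = a" "vs ! j = b" unfolding order_of_def by blast
  then show "order_of (map f vs) (f a) (f b)"
    unfolding order_of_def by (intro exI[of _ i] exI[of _ j]) auto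
qed


definition start :: "'a struc \<Rightarrow> 'a list \<Rightarrow> nat \<Rightarrow> bool" where
  "start G vs i \<longleftrightarrow> \<not> (\<exists>j<i. rel G 0 (vs ! j) (vs ! i))"

definition gsym :: "'a struc \<Rightarrow> bool" where
  "gsym G \<longleftrightarrow> (\<forall>u\<in>univ G. \<forall>v\<in>univ G. rel G 0 u v \<longrightarrow> rel G 0 v u)"

lemma nth_in_take: "k < i \<Longrightarrow> k < length vs \<Longrightarrow> vs ! k \<in> set (take i vs)"
  by (metis length_take min_less_iff_conj nth_mem nth_take)

lemma start0: "start G vs 0" unfolding start_def by simp

lemma trav_closed:
  assumes tr: "is_traversal G vs" and il: "i < length vs" and st: "start G vs i"
    and j: "j < i" and w: "w \<in> univ G" and r: "rel G 0 (vs ! j) w"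
  shows "w \<in> set (take i vs)"
proof (rule ccontr)
  assume nw: "w \<notin> set (take i vs)"
  have trc: "\<forall>i. 0 < i \<longrightarrow> i < length vs \<longrightarrow> (\<exists>j<i. \<exists>w\<in>univ G - set (take i vs). rel G 0 (vs ! j) w) \<longrightarrow> (\<exists>j<i. rel G 0 (vs ! j) (vs ! i))"
    using tr unfolding is_traversal_def by blast
  have "0 < i" using j by simp
  moreover have "\<exists>j<i. \<exists>w\<in>univ G - set (take i vs). rel G 0 (vs ! j) w" using j w nw r by blast
  ultimately have "\<exists>j<i. rel G 0 (vs ! j) (vs ! i)" using trc il by blast
  then show False using st unfolding start_def by blast
qed

lemma edge_set_sym: "gsym G \<Longrightarrow> sym (edge_set G)"
  unfolding gsym_def edge_set_def sym_def by blast

lemma rtrancl_sym_flip: "sym r \<Longrightarrow> (a, b) \<in> r\<^sup>* \<Longrightarrow> (b, a) \<in> r\<^sup>*"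
  using sym_rtrancl[of r] unfolding sym_def by blast

lemma trav_prefix_closed:
  assumes tr: "is_traversal G vs" and il: "i < length vs" and st: "start G vs i"
    and ab: "(a, b) \<in> (edge_set G)\<^sup>*" and a: "a \<in> set (take i vs)"
  shows "b \<in> set (take i vs)"
  using ab a
proof (induction rule: rtrancl_induct)
  case base then show ?case by simp
next
  case (step y z)
  then obtain j where j: "j < length (take i vs)" "take i vs ! j = y" by (auto simp: in_set_conv_nth)
  have "j < i" "vs ! j = y" using j by auto
  moreover have "z \<in> univ G" "rel G 0 y z" using step(2) unfolding edge_set_def by auto
  ultimately show ?case using trav_closed[OF tr il st] by blast
qed

lemma trav_seg:
  assumes tr: "is_traversal G vs" and st: "start G vs r"
  shows "r \<le> j \<Longrightarrow> j < length vs \<Longrightarrow> (\<forall>k. r < k \<and> k \<le> j \<longrightarrow> \<not> start G vs k) \<Longrightarrow>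
    (vs ! r, vs ! j) \<in> (Restr (edge_set G) (set (take (Suc j) vs)))\<^sup>*"
proof (induction j rule: less_induct)
  case (less j)
  have d: "distinct vs" and s: "set vs = univ G" using tr by (auto simp: is_traversal_def)
  show ?case
  proof (cases "j = r")
    case True then show ?thesis by simp
  next
    case False
    then have rj: "r < j" using less.prems by simp
    then have "\<not> start G vs j" using less.prems by blast
    then obtain k where k: "k < j" "rel G 0 (vs ! k) (vs ! j)" unfolding start_def by blast
    have kr: "r \<le> k"
    proof (rule ccontr)
      assume "\<not> r \<le> k"
      then have "k < r" by simp
      moreover have "vs ! j \<in> univ G" using less.prems s by auto
      ultimately have "vs ! j \<in> set (take r vs)" using trav_closed[OF tr _ st] k rj less.prems by auto
      then obtain m where "m < r" "vs ! m = vs ! j" by (auto simp: in_set_conv_nth)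
      then have "m = j" using d less.prems rj by (simp add: nth_eq_iff_index_eq)
      then show False using \<open>m < r\<close> rj by simp
    qed
    have IH: "(vs ! r, vs ! k) \<in> (Restr (edge_set G) (set (take (Suc k) vs)))\<^sup>*"
      using less.IH[of k] k kr less.prems by auto
    have sub: "Restr (edge_set G) (set (take (Suc k) vs)) \<subseteq> Restr (edge_set G) (set (take (Suc j) vs))"
      using set_take_subset_set_take[of "Suc k" "Suc j" vs] k by auto
    have "(vs ! r, vs ! k) \<in> (Restr (edge_set G) (set (take (Suc j) vs)))\<^sup>*"
      using IH rtrancl_mono[OF sub] by blast
    moreover have "(vs ! k, vs ! j) \<in> Restr (edge_set G) (set (take (Suc j) vs))"
    proof -
      have "vs ! k \<in> set (take (Suc j) vs)" "vs ! j \<in> set (take (Suc j) vs)"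
        using k less.prems by (auto intro!: nth_in_take)
      moreover have "vs ! k \<in> univ G" "vs ! j \<in> univ G" using k less.prems s by auto
      ultimately show ?thesis using k unfolding edge_set_def by auto
    qed
    ultimately show ?thesis by (rule rtrancl_into_rtrancl)
  qed
qed

lemma trav_seg':
  assumes tr: "is_traversal G vs" and st: "start G vs r"
    and "r \<le> j" "j < length vs" "\<forall>k. r < k \<and> k \<le> j \<longrightarrow> \<not> start G vs k"
  shows "(vs ! r, vs ! j) \<in> (edge_set G)\<^sup>*"
proof -
  have "Restr (edge_set G) (set (take (Suc j) vs)) \<subseteq> edge_set G" by auto
  then show ?thesis using trav_seg[OF tr st assms(3-5)] rtrancl_mono by blast
qed

lemma trav_conn:
  assumes tr: "is_traversal G vs" and sy: "gsym G" and i: "i < length vs" and j: "j < length vs"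
  shows "(vs ! i, vs ! j) \<in> (edge_set G)\<^sup>* \<longleftrightarrow>
    \<not> (\<exists>k. (i < k \<and> k \<le> j \<or> j < k \<and> k \<le> i) \<and> start G vs k)"
proof
  have d: "distinct vs" using tr by (auto simp: is_traversal_def)
  have nsep: "(vs ! a, vs ! b) \<notin> (edge_set G)\<^sup>*" if "a < k" "k \<le> b" "b < length vs" "start G vs k" for a b k
  proof
    assume "(vs ! a, vs ! b) \<in> (edge_set G)\<^sup>*"
    moreover have "vs ! a \<in> set (take k vs)" using that by (auto intro!: nth_in_take)
    ultimately have "vs ! b \<in> set (take k vs)" using trav_prefix_closed[OF tr _ that(4)] that by auto
    then obtain m where "m < k" "vs ! m = vs ! b" by (auto simp: in_set_conv_nth)
    then have "m = b" using d that by (simp add: nth_eq_iff_index_eq)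
    then show False using \<open>m < k\<close> that by simp
  qed
  assume c: "(vs ! i, vs ! j) \<in> (edge_set G)\<^sup>*"
  then have c': "(vs ! j, vs ! i) \<in> (edge_set G)\<^sup>*" using rtrancl_sym_flip[OF edge_set_sym[OF sy]] by blast
  show "\<not> (\<exists>k. (i < k \<and> k \<le> j \<or> j < k \<and> k \<le> i) \<and> start G vs k)"
    using nsep[of i _ j] nsep[of j _ i] c c' i j by blast
next
  assume ns: "\<not> (\<exists>k. (i < k \<and> k \<le> j \<or> j < k \<and> k \<le> i) \<and> start G vs k)"
  define m where "m = min i j"
  define S where "S = {k. k \<le> m \<and> start G vs k}"
  have fin: "finite S" unfolding S_def by simp
  have ne: "0 \<in> S" unfolding S_def using start0 by simp
  define r where "r = Max S"
  have rS: "r \<in> S" using fin ne Max_in unfolding r_def by blast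
  have rmax: "k \<in> S \<Longrightarrow> k \<le> r" for k using fin Max_ge unfolding r_def by blast
  have str: "start G vs r" and rm: "r \<le> m" using rS unfolding S_def by auto
  have nos: "\<not> start G vs k" if "r < k" "k \<le> i \<or> k \<le> j" for k
  proof
    assume sk: "start G vs k"
    show False
    proof (cases "k \<le> m")
      case True then show False using rmax[of k] sk that unfolding S_def by auto
    next
      case False then show False using ns sk that unfolding m_def by auto
    qed
  qed
  have ri: "(vs ! r, vs ! i) \<in> (edge_set G)\<^sup>*"
    using trav_seg'[OF tr str _ i] rm nos unfolding m_def by auto
  have rj: "(vs ! r, vs ! j) \<in> (edge_set G)\<^sup>*"
    using trav_seg'[OF tr str _ j] rm nos unfolding m_def by auto
  have "(vs ! i, vs ! r) \<in> (edge_set G)\<^sup>*" using rtrancl_sym_flip[OF edge_set_sym[OF sy] ri] .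
  then show "(vs ! i, vs ! j) \<in> (edge_set G)\<^sup>*" using rj by (rule rtrancl_trans)
qed


definition tcond :: "'a struc \<Rightarrow> 'a list \<Rightarrow> bool" where
  "tcond G ps \<longleftrightarrow> (\<forall>i. 0 < i \<longrightarrow> i < length ps \<longrightarrow>
        (\<exists>j<i. \<exists>w\<in>univ G - set (take i ps). rel G 0 (ps ! j) w) \<longrightarrow>
        (\<exists>j<i. rel G 0 (ps ! j) (ps ! i)))"

lemma trav_prefix_exists:
  assumes fin: "finite (univ G)"
  shows "k \<le> card (univ G) \<Longrightarrow> \<exists>ps. length ps = k \<and> distinct ps \<and> set ps \<subseteq> univ G \<and> tcond G ps"
proof (induction k)
  case 0 then show ?case by (intro exI[of _ "[]"]) (simp add: tcond_def)
next
  case (Suc k)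
  then obtain ps where ps: "length ps = k" "distinct ps" "set ps \<subseteq> univ G" "tcond G ps" by auto
  have "card (set ps) = k" using ps distinct_card by metis
  then have "set ps \<noteq> univ G" using Suc.prems by auto
  then have ne: "univ G - set ps \<noteq> {}" using ps(3) by blast
  obtain v where v: "v \<in> univ G - set ps"
    and vc: "(\<exists>j<k. \<exists>w\<in>univ G - set ps. rel G 0 (ps ! j) w) \<Longrightarrow> (\<exists>j<k. rel G 0 (ps ! j) v)"
  proof (cases "\<exists>j<k. \<exists>w\<in>univ G - set ps. rel G 0 (ps ! j) w")
    case True
    then obtain j w where "j < k" "w \<in> univ G - set ps" "rel G 0 (ps ! j) w" by blast
    then show ?thesis using that[of w] by blast
  next
    case False
    then show ?thesis using that ne by blast
  qed
  define qs where "qs = ps @ [v]"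
  have "tcond G qs" unfolding tcond_def
  proof (intro allI impI)
    fix i assume i: "0 < i" "i < length qs" and ex: "\<exists>j<i. \<exists>w\<in>univ G - set (take i qs). rel G 0 (qs ! j) w"
    show "\<exists>j<i. rel G 0 (qs ! j) (qs ! i)"
    proof (cases "i < k")
      case True
      have tk: "take i qs = take i ps" using True ps(1) unfolding qs_def by simp
      have nj: "qs ! j = ps ! j" if "j \<le> i" for j using that True ps(1) unfolding qs_def by (simp add: nth_append)
      have "\<exists>j<i. \<exists>w\<in>univ G - set (take i ps). rel G 0 (ps ! j) w" using ex tk nj by fastforce
      then have "\<exists>j<i. rel G 0 (ps ! j) (ps ! i)" using ps(4) i(1) True ps(1) unfolding tcond_def by blast
      then show ?thesis using nj by fastforce
    next
      case False
      then have ik: "i = k" using i ps(1) unfolding qs_def by simp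
      have tk: "take i qs = ps" using ik ps(1) unfolding qs_def by simp
      have nj: "qs ! j = ps ! j" if "j < i" for j using that ik ps(1) unfolding qs_def by (simp add: nth_append)
      have "\<exists>j<k. \<exists>w\<in>univ G - set ps. rel G 0 (ps ! j) w" using ex tk nj ik by fastforce
      then obtain j where "j < k" "rel G 0 (ps ! j) v" using vc by blast
      moreover have "qs ! i = v" using ik ps(1) unfolding qs_def by (simp add: nth_append)
      ultimately show ?thesis using nj ik by (intro exI[of _ j]) auto
    qed
  qed
  moreover have "length qs = Suc k" "distinct qs" "set qs \<subseteq> univ G" using ps v unfolding qs_def by auto
  ultimately show ?case by blast
qed

lemma traversal_exists:
  assumes fin: "finite (univ G)"
  shows "\<exists>vs. is_traversal G vs"
proof -
  obtain ps where ps: "length ps = card (univ G)" "distinct ps" "set ps \<subseteq> univ G" "tcond G ps"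
    using trav_prefix_exists[OF fin, of "card (univ G)"] by auto
  have "card (set ps) = card (univ G)" using ps distinct_card by metis
  then have "set ps = univ G" using card_seteq[OF fin ps(3)] by simp
  then show ?thesis using ps unfolding is_traversal_def tcond_def by blast
qed


lemma expand_simps[simp]:
  "univ (expand G vs) = univ G" "rel (expand G vs) 0 = rel G 0" "rel (expand G vs) (Suc 0) = order_of vs"
  "cst (expand G vs) = cst G"
  unfolding expand_def by auto

lemma trav_inv_general:
  assumes graphs: "\<forall>G\<in>GG. is_npgraph n G"
    and sent: "sentence (2, n) \<phi>"
    and indep: "\<forall>G\<in>GG. \<forall>vs ws. is_traversal G vs \<longrightarrow> is_traversal G ws \<longrightarrow>
                 (models (expand G vs) \<phi> \<longleftrightarrow> models (expand G ws) \<phi>)"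
  shows "trav_invariant n GG \<phi>"
  unfolding trav_invariant_def
proof (intro ballI allI impI)
  fix G H :: "'a struc" and vs ws
  assume G: "G \<in> GG" and H: "H \<in> GG" and trG: "is_traversal G vs" and trH: "is_traversal H ws"
    and iso: "npiso n G H"
  obtain f where bij: "bij_betw f (univ G) (univ H)"
    and e: "\<And>u v. u \<in> univ G \<Longrightarrow> v \<in> univ G \<Longrightarrow> rel G 0 u v \<longleftrightarrow> rel H 0 (f u) (f v)"
    and c: "\<And>c. c < n \<Longrightarrow> f (cst G c) = cst H c"
    using iso unfolding npiso_def by blast
  have gG: "is_npgraph n G" using graphs G by blast
  then obtain u0 where u0: "u0 \<in> univ G" unfolding is_npgraph_def by blast
  have cG: "\<And>c. c < n \<Longrightarrow> cst G c \<in> univ G" using gG unfolding is_npgraph_def by blast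
  have inj: "inj_on f (univ G)" using bij bij_betw_def by blast
  have sv: "set vs = univ G" using trG unfolding is_traversal_def by blast
  have fv: "fv \<phi> = {}" and wf: "wf_fm (2, n) \<phi>" using sent unfolding sentence_def by auto
  have trH': "is_traversal H (map f vs)" using traversal_transport[OF trG bij] e by blast
  have "sat (expand G vs) (\<lambda>_. u0) \<phi> \<longleftrightarrow> sat (expand H (map f vs)) (f \<circ> (\<lambda>_. u0)) \<phi>"
  proof (rule sat_iso[where nr = 2 and nc = n])
    show "bij_betw f (univ (expand G vs)) (univ (expand H (map f vs)))" using bij by simp
    show "wf_fm (2, n) \<phi>" by (rule wf)
    show "\<And>i. (\<lambda>_. u0) i \<in> univ (expand G vs)" using u0 by simp
    show "\<And>c. c < n \<Longrightarrow> cst (expand G vs) c \<in> univ (expand G vs) \<and> f (cst (expand G vs) c) = cst (expand H (map f vs)) c"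
      using cG c by simp
    fix r :: nat and a b assume r: "r < 2" and a: "a \<in> univ (expand G vs)" and b: "b \<in> univ (expand G vs)"
    show "rel (expand G vs) r a b = rel (expand H (map f vs)) r (f a) (f b)"
    proof (cases "r = 0")
      case True then show ?thesis using e a b by simp
    next
      case False then have "r = Suc 0" using r by simp
      then show ?thesis using order_of_transport[of vs "univ G" f a b] sv inj a b by simp
    qed
  qed
  then have "models (expand G vs) \<phi> \<longleftrightarrow> models (expand H (map f vs)) \<phi>"
    using models_sentence[OF fv] by metis
  also have "\<dots> \<longleftrightarrow> models (expand H ws) \<phi>" using indep H trH' trH by blast
  finally show "models (expand G vs) \<phi> \<longleftrightarrow> models (expand H ws) \<phi>" .
qed


definition Disj :: "fm \<Rightarrow> fm \<Rightarrow> fm" where "Disj a b = Neg (Conj (Neg a) (Neg b))"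
definition Lt :: "trm \<Rightarrow> trm \<Rightarrow> fm" where "Lt t u = R 1 t u"
definition Ed :: "trm \<Rightarrow> trm \<Rightarrow> fm" where "Ed t u = R 0 t u"

lemma sat_Disj[simp]: "sat A \<sigma> (Disj a b) \<longleftrightarrow> sat A \<sigma> a \<or> sat A \<sigma> b" by (simp add: Disj_def)
lemma sat_Lt[simp]: "sat A \<sigma> (Lt t u) \<longleftrightarrow> rel A (Suc 0) (evalt A \<sigma> t) (evalt A \<sigma> u)" by (simp add: Lt_def)
lemma sat_Ed[simp]: "sat A \<sigma> (Ed t u) \<longleftrightarrow> rel A 0 (evalt A \<sigma> t) (evalt A \<sigma> u)" by (simp add: Ed_def)
lemma wf_Disj[simp]: "wf_fm S (Disj a b) \<longleftrightarrow> wf_fm S a \<and> wf_fm S b" by (simp add: Disj_def)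
lemma wf_Lt[simp]: "wf_fm S (Lt t u) \<longleftrightarrow> 1 < fst S \<and> wf_trm S t \<and> wf_trm S u" by (simp add: Lt_def)
lemma wf_Ed[simp]: "wf_fm S (Ed t u) \<longleftrightarrow> 0 < fst S \<and> wf_trm S t \<and> wf_trm S u" by (simp add: Ed_def)
lemma fv_Disj[simp]: "fv (Disj a b) = fv a \<union> fv b" by (simp add: Disj_def)
lemma fv_Lt[simp]: "fv (Lt t u) = fvt t \<union> fvt u" by (simp add: Lt_def)
lemma fv_Ed[simp]: "fv (Ed t u) = fvt t \<union> fvt u" by (simp add: Ed_def)

definition SCf :: "trm \<Rightarrow> trm \<Rightarrow> nat \<Rightarrow> nat \<Rightarrow> fm" where
  "SCf t1 t2 w u = Neg (Exi w (Conj
      (Disj (Conj (Lt t1 (V w)) (Disj (Lt (V w) t2) (Eq (V w) t2)))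
            (Conj (Lt t2 (V w)) (Disj (Lt (V w) t1) (Eq (V w) t1))))
      (Neg (Exi u (Conj (Lt (V u) (V w)) (Ed (V u) (V w)))))))"

definition conn_sem :: "'a struc \<Rightarrow> 'a list \<Rightarrow> 'a \<Rightarrow> 'a \<Rightarrow> bool" where
  "conn_sem G vs a b \<longleftrightarrow> \<not> (\<exists>c\<in>univ G.
      (order_of vs a c \<and> (order_of vs c b \<or> c = b) \<or> order_of vs b c \<and> (order_of vs c a \<or> c = a)) \<and>
      \<not> (\<exists>d\<in>univ G. order_of vs d c \<and> rel G 0 d c))"

lemma evalt_upd: "x \<notin> fvt t \<Longrightarrow> evalt A (\<sigma>(x := a)) t = evalt A \<sigma> t"
  by (cases t) auto

lemma sat_SCf:
  assumes "w \<notin> fvt t1" "w \<notin> fvt t2" "u \<notin> fvt t1" "u \<notin> fvt t2" "w \<noteq> u"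
  shows "sat (expand G vs) \<sigma> (SCf t1 t2 w u) \<longleftrightarrow>
    conn_sem G vs (evalt (expand G vs) \<sigma> t1) (evalt (expand G vs) \<sigma> t2)"
  using assms unfolding SCf_def conn_sem_def by (simp add: evalt_upd)

lemma fv_SCf: "fv (SCf t1 t2 w u) = (fvt t1 \<union> fvt t2) - {w}"
  unfolding SCf_def by auto

lemma wf_SCf: "wf_trm S t1 \<Longrightarrow> wf_trm S t2 \<Longrightarrow> 1 < fst S \<Longrightarrow> wf_fm S (SCf t1 t2 w u)"
  unfolding SCf_def by auto

lemma conn_sem_iff:
  assumes tr: "is_traversal G vs" and sy: "gsym G" and a: "a \<in> univ G" and b: "b \<in> univ G"
  shows "conn_sem G vs a b \<longleftrightarrow> (a, b) \<in> (edge_set G)\<^sup>*"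
proof -
  have d: "distinct vs" and s: "set vs = univ G" using tr by (auto simp: is_traversal_def)
  obtain i where i: "i < length vs" "vs ! i = a" using a s by (metis in_set_conv_nth)
  obtain j where j: "j < length vs" "vs ! j = b" using b s by (metis in_set_conv_nth)
  have U: "univ G = (\<lambda>k. vs ! k) ` {..<length vs}" unfolding s[symmetric] by (auto simp: set_conv_nth)
  have ord: "order_of vs (vs ! p) (vs ! q) \<longleftrightarrow> p < q" if "p < length vs" "q < length vs" for p q
    using order_of_nth[OF d that] .
  have eqk: "vs ! p = vs ! q \<longleftrightarrow> p = q" if "p < length vs" "q < length vs" for p q
    using d that nth_eq_iff_index_eq by blast
  have st: "(\<not> (\<exists>d\<in>univ G. order_of vs d (vs ! k) \<and> rel G 0 d (vs ! k))) \<longleftrightarrow> start G vs k"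
    if "k < length vs" for k
    unfolding start_def U using ord that by auto
  have ex: "(\<exists>c\<in>univ G. Q c) \<longleftrightarrow> (\<exists>k<length vs. Q (vs ! k))" for Q
    unfolding U by blast
  have qk: "((order_of vs a (vs ! k) \<and> (order_of vs (vs ! k) b \<or> vs ! k = b) \<or>
             order_of vs b (vs ! k) \<and> (order_of vs (vs ! k) a \<or> vs ! k = a)) \<and>
            \<not> (\<exists>d\<in>univ G. order_of vs d (vs ! k) \<and> rel G 0 d (vs ! k))) \<longleftrightarrow>
          ((i < k \<and> (k < j \<or> k = j) \<or> j < k \<and> (k < i \<or> k = i)) \<and> start G vs k)"
    if k: "k < length vs" for k
  proof -
    have "order_of vs a (vs ! k) \<longleftrightarrow> i < k" "order_of vs (vs ! k) b \<longleftrightarrow> k < j"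
      "order_of vs b (vs ! k) \<longleftrightarrow> j < k" "order_of vs (vs ! k) a \<longleftrightarrow> k < i"
      "vs ! k = b \<longleftrightarrow> k = j" "vs ! k = a \<longleftrightarrow> k = i"
      using ord[OF i(1) k] ord[OF k j(1)] ord[OF j(1) k] ord[OF k i(1)] eqk[OF k j(1)] eqk[OF k i(1)] i j
      by simp_all
    then show ?thesis using st[OF k] by simp
  qed
  have "conn_sem G vs a b \<longleftrightarrow> \<not> (\<exists>k<length vs. (i < k \<and> (k < j \<or> k = j) \<or> j < k \<and> (k < i \<or> k = i)) \<and> start G vs k)"
  proof -
    define Q where "Q = (\<lambda>c. (order_of vs a c \<and> (order_of vs c b \<or> c = b) \<or> order_of vs b c \<and> (order_of vs c a \<or> c = a)) \<and>
      \<not> (\<exists>d\<in>univ G. order_of vs d c \<and> rel G 0 d c))"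
    have "conn_sem G vs a b \<longleftrightarrow> \<not> (\<exists>c\<in>univ G. Q c)" unfolding conn_sem_def Q_def by (rule refl)
    also have "\<dots> \<longleftrightarrow> \<not> (\<exists>k<length vs. Q (vs ! k))" using ex[of Q] by simp
    also have "\<dots> \<longleftrightarrow> \<not> (\<exists>k<length vs. (i < k \<and> (k < j \<or> k = j) \<or> j < k \<and> (k < i \<or> k = i)) \<and> start G vs k)"
    proof -
      have "\<forall>k<length vs. Q (vs ! k) \<longleftrightarrow> ((i < k \<and> (k < j \<or> k = j) \<or> j < k \<and> (k < i \<or> k = i)) \<and> start G vs k)"
        unfolding Q_def by (intro allI impI, rule qk, assumption)
      then show ?thesis by blast
    qed
    finally show ?thesis .
  qed
  also have "\<dots> \<longleftrightarrow> \<not> (\<exists>k. (i < k \<and> k \<le> j \<or> j < k \<and> k \<le> i) \<and> start G vs k)"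
    using i j by (auto; metis le_less less_le_trans)
  also have "\<dots> \<longleftrightarrow> (a, b) \<in> (edge_set G)\<^sup>*" using trav_conn[OF tr sy i(1) j(1)] i j by simp
  finally show ?thesis .
qed

lemma basic_tid_intro:
  fixes KK :: "'a struc set" and P :: "'a list struc \<Rightarrow> bool"
  assumes QK: "Q \<subseteq> KK"
    and wfi: "wf_interp K n \<pi>"
    and sent: "sentence (2, n) \<phi>"
    and tot: "\<forall>A\<in>KK. interp_defined n \<pi> A \<and> is_npgraph n (apply_interp \<pi> A)"
    and char: "\<And>G vs. is_npgraph n G \<Longrightarrow> is_traversal G vs \<Longrightarrow> (models (expand G vs) \<phi> \<longleftrightarrow> P G)"
    and QP: "\<forall>A\<in>KK. A \<in> Q \<longleftrightarrow> P (apply_interp \<pi> A)"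
  shows "basic_tid K KK Q"
proof -
  define GG where "GG = {G :: 'a list struc. is_npgraph n G}"
  have "trav_invariant n GG \<phi>"
    by (rule trav_inv_general) (use sent char in \<open>auto simp: GG_def\<close>)
  moreover have "left_total n \<pi> KK GG" using tot unfolding left_total_def GG_def by blast
  moreover have "\<forall>A\<in>KK. A \<in> Q \<longleftrightarrow> trav_models (apply_interp \<pi> A) \<phi>"
  proof
    fix A assume A: "A \<in> KK"
    have g: "is_npgraph n (apply_interp \<pi> A)" using tot A by blast
    then obtain vs where vs: "is_traversal (apply_interp \<pi> A) vs"
      using traversal_exists unfolding is_npgraph_def by blast
    have "trav_models (apply_interp \<pi> A) \<phi> \<longleftrightarrow> P (apply_interp \<pi> A)"
      unfolding trav_models_def using char[OF g] vs by blast
    then show "A \<in> Q \<longleftrightarrow> trav_models (apply_interp \<pi> A) \<phi>" using QP A by blast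
  qed
  ultimately show ?thesis unfolding basic_tid_def using QK wfi sent
    by (intro conjI exI[of _ n] exI[of _ GG] exI[of _ \<phi>] exI[of _ \<pi>]) (auto simp: GG_def)
qed

lemma rtrancl_edge_map:
  assumes "(a, b) \<in> (edge_set G)\<^sup>*"
    and "\<And>x y. x \<in> univ G \<Longrightarrow> y \<in> univ G \<Longrightarrow> rel G 0 x y \<Longrightarrow> f x \<in> univ H \<and> f y \<in> univ H \<and> rel H 0 (f x) (f y)"
  shows "(f a, f b) \<in> (edge_set H)\<^sup>*"
  using assms(1)
proof (induction rule: rtrancl_induct)
  case base then show ?case by simp
next
  case (step y z)
  then have "(f y, f z) \<in> edge_set H" using assms(2) unfolding edge_set_def by auto
  then show ?case using step(3) by (rule rtrancl_into_rtrancl[rotated])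
qed

lemma npgraph_gsym: "is_npgraph n G \<Longrightarrow> gsym G"
  unfolding is_npgraph_def gsym_def by blast

definition pi1 :: "fm \<Rightarrow> (nat \<Rightarrow> (fm \<times> trm list) list) \<Rightarrow> interp" where
  "pi1 e cd = \<lparr>arity = 1, dfm = Eq (V 0) (V 0), efm = e, cdefs = cd\<rparr>"

lemma pi1_univ: "univ (apply_interp (pi1 e cd) A) = (\<lambda>x. [x]) ` univ A"
proof -
  have "{xs. length xs = 1 \<and> set xs \<subseteq> univ A} = (\<lambda>x. [x]) ` univ A"
  proof (intro set_eqI iffI)
    fix xs assume "xs \<in> {xs. length xs = 1 \<and> set xs \<subseteq> univ A}"
    then obtain x where "xs = [x]" "x \<in> univ A" by (cases xs) auto
    then show "xs \<in> (\<lambda>x. [x]) ` univ A" by blast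
  qed auto
  then show ?thesis unfolding apply_interp_def pi1_def by simp
qed

lemma pi1_rel: "rel (apply_interp (pi1 e cd) A) r [a] [b] \<longleftrightarrow> r = 0 \<and> sat A (tup [a, b]) e"
  unfolding apply_interp_def pi1_def by simp

lemma tup_simps[simp]: "tup [a, b] 0 = a" "tup [a, b] (Suc 0) = b"
  unfolding tup_def by simp_all

lemma finite_pi1: "finite (univ A) \<Longrightarrow> finite (univ (apply_interp (pi1 e cd) A))"
  unfolding pi1_univ by simp

section \<open>st-connectivity\<close>

definition pi_st :: interp where
  "pi_st = pi1 (R 0 (V 0) (V 1)) (\<lambda>c. [(Eq (C 0) (C 0), [C c])])"

definition phi_st :: fm where "phi_st = SCf (C 0) (C 1) 2 3"

lemma pi_st_cst: "cst (apply_interp pi_st A) c = [cst A c]"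
  unfolding apply_interp_def pi_st_def pi1_def models_def by simp

lemma pi_st_rel: "rel (apply_interp pi_st A) 0 [a] [b] \<longleftrightarrow> rel A 0 a b"
  unfolding pi_st_def pi1_rel by simp

lemma tid_st: "tid (1, 2) pointed2_graphs st_conn"
proof (rule tid.basic, rule basic_tid_intro[where P = "\<lambda>G. (cst G 0, cst G 1) \<in> (edge_set G)\<^sup>*" and \<phi> = phi_st and n = 2])
  show "st_conn \<subseteq> pointed2_graphs" unfolding st_conn_def by blast
  show "wf_interp (1, 2) 2 pi_st"
    unfolding wf_interp_def pi_st_def pi1_def sentence_def by auto
  show "sentence (2, 2) phi_st" unfolding sentence_def phi_st_def by (simp add: fv_SCf wf_SCf)
  show "\<forall>A\<in>pointed2_graphs. interp_defined 2 pi_st A \<and> is_npgraph 2 (apply_interp pi_st A)"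
  proof
    fix A assume "A \<in> pointed2_graphs"
    then have g: "is_npgraph 2 A" unfolding pointed2_graphs_def by simp
    have "interp_defined 2 pi_st A" unfolding interp_defined_def pi_st_def pi1_def models_def by simp
    moreover have "is_npgraph 2 (apply_interp pi_st A)"
    proof -
      have U: "univ (apply_interp pi_st A) = (\<lambda>x. [x]) ` univ A" unfolding pi_st_def by (rule pi1_univ)
      show ?thesis using g unfolding is_npgraph_def U by (auto simp: pi_st_cst pi_st_rel)
    qed
    ultimately show "interp_defined 2 pi_st A \<and> is_npgraph 2 (apply_interp pi_st A)" by blast
  qed
  fix G :: "'b list struc" and vs
  assume g: "is_npgraph 2 G" and tr: "is_traversal G vs"
  have "models (expand G vs) phi_st \<longleftrightarrow> sat (expand G vs) (\<lambda>_. undefined) phi_st"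
    by (rule models_sentence) (simp add: phi_st_def fv_SCf)
  also have "\<dots> \<longleftrightarrow> conn_sem G vs (cst G 0) (cst G 1)"
    unfolding phi_st_def by (subst sat_SCf) auto
  also have "\<dots> \<longleftrightarrow> (cst G 0, cst G 1) \<in> (edge_set G)\<^sup>*"
    using conn_sem_iff[OF tr npgraph_gsym[OF g]] g unfolding is_npgraph_def by simp
  finally show "models (expand G vs) phi_st \<longleftrightarrow> (cst G 0, cst G 1) \<in> (edge_set G)\<^sup>*" .
next
  show "\<forall>A\<in>pointed2_graphs. A \<in> st_conn \<longleftrightarrow>
     (cst (apply_interp pi_st A) 0, cst (apply_interp pi_st A) 1) \<in> (edge_set (apply_interp pi_st A))\<^sup>*"
  proof
    fix A assume A: "A \<in> pointed2_graphs"
    have U: "univ (apply_interp pi_st A) = (\<lambda>x. [x]) ` univ A" unfolding pi_st_def by (rule pi1_univ)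
    have "(cst A 0, cst A 1) \<in> (edge_set A)\<^sup>* \<longleftrightarrow> ([cst A 0], [cst A 1]) \<in> (edge_set (apply_interp pi_st A))\<^sup>*"
    proof
      assume "(cst A 0, cst A 1) \<in> (edge_set A)\<^sup>*"
      then show "([cst A 0], [cst A 1]) \<in> (edge_set (apply_interp pi_st A))\<^sup>*"
        by (rule rtrancl_edge_map[where f = "\<lambda>x. [x]"]) (auto simp: U pi_st_rel)
    next
      assume "([cst A 0], [cst A 1]) \<in> (edge_set (apply_interp pi_st A))\<^sup>*"
      then have "(hd [cst A 0], hd [cst A 1]) \<in> (edge_set A)\<^sup>*"
        by (rule rtrancl_edge_map[where f = hd]) (auto simp: U pi_st_rel)
      then show "(cst A 0, cst A 1) \<in> (edge_set A)\<^sup>*" by simp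
    qed
    then show "A \<in> st_conn \<longleftrightarrow>
     (cst (apply_interp pi_st A) 0, cst (apply_interp pi_st A) 1) \<in> (edge_set (apply_interp pi_st A))\<^sup>*"
      using A unfolding st_conn_def by (simp add: pi_st_cst)
  qed
qed

section \<open>Acyclicity\<close>

lemma cycle_map:
  assumes c: "is_cycle G cs" and inj: "inj_on f (univ G)"
    and m: "\<And>x. x \<in> univ G \<Longrightarrow> f x \<in> univ H"
    and e: "\<And>x y. x \<in> univ G \<Longrightarrow> y \<in> univ G \<Longrightarrow> rel G 0 x y \<Longrightarrow> rel H 0 (f x) (f y)"
  shows "is_cycle H (map f cs)"
proof -
  have l: "3 \<le> length cs" and d: "distinct cs" and s: "set cs \<subseteq> univ G"
    and r: "\<forall>i<length cs. rel G 0 (cs ! i) (cs ! ((i + 1) mod length cs))"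
    using c unfolding is_cycle_def by auto
  have "distinct (map f cs)" using d inj s by (simp add: distinct_map inj_on_subset)
  moreover have "set (map f cs) \<subseteq> univ H" using s m by auto
  moreover have "\<forall>i<length (map f cs). rel H 0 (map f cs ! i) (map f cs ! ((i + 1) mod length (map f cs)))"
  proof (intro allI impI)
    fix i assume i': "i < length (map f cs)"
    then have i: "i < length cs" by simp
    have im: "(i + 1) mod length cs < length cs" using l by (intro mod_less_divisor) linarith
    then have "cs ! i \<in> univ G" "cs ! ((i + 1) mod length cs) \<in> univ G" using i s nth_mem by blast+
    then have "rel H 0 (f (cs ! i)) (f (cs ! ((i + 1) mod length cs)))" using e r i by blast
    then show "rel H 0 (map f cs ! i) (map f cs ! ((i + 1) mod length (map f cs)))"
      using i im by simp
  qed
  ultimately show ?thesis using l unfolding is_cycle_def by simp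
qed

definition has_fork :: "'a struc \<Rightarrow> 'a list \<Rightarrow> bool" where
  "has_fork G vs \<longleftrightarrow> (\<exists>v\<in>univ G. \<exists>a\<in>univ G. \<exists>b\<in>univ G. order_of vs a v \<and> order_of vs b v \<and>
      rel G 0 a v \<and> rel G 0 b v \<and> a \<noteq> b)"

lemma cycle_fork:
  assumes tr: "is_traversal G vs" and sy: "gsym G" and c: "is_cycle G cs"
  shows "has_fork G vs"
proof -
  have l: "3 \<le> length cs" and dc: "distinct cs" and s: "set cs \<subseteq> univ G"
    and r: "\<forall>i<length cs. rel G 0 (cs ! i) (cs ! ((i + 1) mod length cs))"
    using c unfolding is_cycle_def by auto
  have d: "distinct vs" and sv: "set vs = univ G" using tr by (auto simp: is_traversal_def)
  define I where "I = {i. i < length vs \<and> vs ! i \<in> set cs}"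
  have fI: "finite I" unfolding I_def by simp
  have "cs ! 0 \<in> set cs" using l by (intro nth_mem) linarith
  then have "cs ! 0 \<in> set vs" using s sv by blast
  then obtain i0 where "i0 < length vs" "vs ! i0 = cs ! 0" by (auto simp: in_set_conv_nth)
  then have neI: "I \<noteq> {}" unfolding I_def using \<open>cs ! 0 \<in> set cs\<close> by auto
  define m where "m = Max I"
  have mI: "m \<in> I" using fI neI Max_in unfolding m_def by blast
  have mmax: "i \<in> I \<Longrightarrow> i \<le> m" for i using fI Max_ge unfolding m_def by blast
  define v where "v = vs ! m"
  have vcs: "v \<in> set cs" and ml: "m < length vs" using mI unfolding v_def I_def by auto
  have before: "order_of vs y v" if "y \<in> set cs" "y \<noteq> v" for y
  proof -
    have "y \<in> set vs" using that s sv by blast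
    then obtain i where i: "i < length vs" "vs ! i = y" by (auto simp: in_set_conv_nth)
    then have "i \<in> I" using that unfolding I_def by auto
    then have "i \<le> m" by (rule mmax)
    moreover have "i \<noteq> m" using i that unfolding v_def by auto
    ultimately have "i < m" by simp
    then show ?thesis using order_of_nth[OF d i(1) ml] i unfolding v_def by simp
  qed
  obtain k where k: "k < length cs" "cs ! k = v" using vcs by (auto simp: in_set_conv_nth)
  define L where "L = length cs"
  define ka where "ka = (if k + 1 = L then 0 else k + 1)"
  define kb where "kb = (if k = 0 then L - 1 else k - 1)"
  have kaL: "ka < L" "ka \<noteq> k" using k l unfolding ka_def L_def by auto
  have kbL: "kb < L" "kb \<noteq> k" using k l unfolding kb_def L_def by auto
  have kab: "ka \<noteq> kb" using k l unfolding ka_def kb_def L_def by auto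
  have kam: "(k + 1) mod L = ka" using k unfolding ka_def L_def by auto
  have kbm: "(kb + 1) mod L = k" using k l unfolding kb_def L_def by auto
  define a where "a = cs ! ka"
  define b where "b = cs ! kb"
  have neq: "cs ! x \<noteq> cs ! y" if "x < L" "y < L" "x \<noteq> y" for x y
    using nth_eq_iff_index_eq[OF dc, of x y] that unfolding L_def by simp
  have a: "a \<in> set cs" "a \<noteq> v" using kaL k neq[of ka k] unfolding a_def L_def by simp_all
  have b: "b \<in> set cs" "b \<noteq> v" using kbL k neq[of kb k] unfolding b_def L_def by simp_all
  have ab: "a \<noteq> b" using kaL kbL kab neq unfolding a_def b_def by simp
  have va: "rel G 0 v a" using r k kam unfolding a_def L_def by auto
  have bv: "rel G 0 b v" using r kbL kbm k unfolding b_def L_def by auto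
  have inU: "v \<in> univ G" "a \<in> univ G" "b \<in> univ G" using vcs a b s by auto
  have av: "rel G 0 a v" using sy va inU unfolding gsym_def by blast
  show ?thesis unfolding has_fork_def
    using inU before[OF a] before[OF b] av bv ab by (intro bexI[of _ v] bexI[of _ a] bexI[of _ b]) simp_all
qed

lemma Restr_sym: "sym r \<Longrightarrow> sym (Restr r P)"
  unfolding sym_def by blast

lemma fork_cycle:
  assumes tr: "is_traversal G vs" and sy: "gsym G" and f: "has_fork G vs"
  shows "\<exists>cs. is_cycle G cs"
proof -
  have d: "distinct vs" and sv: "set vs = univ G" using tr by (auto simp: is_traversal_def)
  obtain v a b where inU: "v \<in> univ G" "a \<in> univ G" "b \<in> univ G"
    and o: "order_of vs a v" "order_of vs b v" and e: "rel G 0 a v" "rel G 0 b v" and ab: "a \<noteq> b"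
    using f unfolding has_fork_def by blast
  have "v \<in> set vs" using inU sv by simp
  then obtain p where p: "p < length vs" "vs ! p = v" by (auto simp: in_set_conv_nth)
  have "a \<in> set vs" using inU sv by simp
  then obtain i where i: "i < length vs" "vs ! i = a" by (auto simp: in_set_conv_nth)
  have "b \<in> set vs" using inU sv by simp
  then obtain j where j: "j < length vs" "vs ! j = b" by (auto simp: in_set_conv_nth)
  have ip: "i < p" using order_of_nth[OF d i(1) p(1)] o i p by simp
  have jp: "j < p" using order_of_nth[OF d j(1) p(1)] o j p by simp
  define S where "S = {k. k \<le> p \<and> start G vs k}"
  have fin: "finite S" unfolding S_def by simp
  have ne: "0 \<in> S" unfolding S_def using start0 by simp
  define r where "r = Max S"
  have rS: "r \<in> S" using fin ne Max_in unfolding r_def by blast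
  have rmax: "k \<in> S \<Longrightarrow> k \<le> r" for k using fin Max_ge unfolding r_def by blast
  have str: "start G vs r" and rp: "r \<le> p" using rS unfolding S_def by auto
  have notafter: "r \<le> q" if q: "q < length vs" "rel G 0 (vs ! q) v" for q
  proof (rule ccontr)
    assume "\<not> r \<le> q"
    then have "q < r" by simp
    then have "v \<in> set (take r vs)" using trav_closed[OF tr _ str _ inU(1) q(2)] rp p(1) by simp
    then obtain m where m: "m < r" "vs ! m = vs ! p" using p by (auto simp: in_set_conv_nth)
    have "m < length vs" using m rp p by simp
    then have "m = p" using d p(1) m(2) nth_eq_iff_index_eq by metis
    then show False using \<open>m < r\<close> rp by simp
  qed
  have ri: "r \<le> i" using notafter i e by simp
  have rj: "r \<le> j" using notafter j e by simp
  have nos: "\<forall>k. r < k \<and> k \<le> q \<longrightarrow> \<not> start G vs k" if "q < p" for q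
  proof (intro allI impI notI)
    fix k assume "r < k \<and> k \<le> q" "start G vs k"
    then have "k \<in> S" using that unfolding S_def by simp
    then show False using rmax \<open>r < k \<and> k \<le> q\<close> by fastforce
  qed
  define P where "P = set (take p vs)"
  define R where "R = Restr (edge_set G) P"
  have sub: "Restr (edge_set G) (set (take (Suc q) vs)) \<subseteq> R" if "q < p" for q
    using set_take_subset_set_take[of "Suc q" p vs] that unfolding R_def P_def by auto
  have "(vs ! r, a) \<in> R\<^sup>*"
    using trav_seg[OF tr str ri i(1) nos[OF ip]] rtrancl_mono[OF sub[OF ip]] i by blast
  moreover have "(vs ! r, b) \<in> R\<^sup>*"
    using trav_seg[OF tr str rj j(1) nos[OF jp]] rtrancl_mono[OF sub[OF jp]] j by blast
  moreover have "sym R" unfolding R_def by (rule Restr_sym[OF edge_set_sym[OF sy]])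
  ultimately have "(a, b) \<in> R\<^sup>*" using rtrancl_sym_flip[of R "vs ! r" a] rtrancl_trans[of a "vs ! r" R b] by blast
  then have "(\<lambda>x y. (x, y) \<in> R)\<^sup>*\<^sup>* a b" by (simp add: rtranclp_rtrancl_eq)
  then obtain xs0 where "rtrancl_path (\<lambda>x y. (x, y) \<in> R) a xs0 b"
    using rtranclp_eq_rtrancl_path by metis
  then obtain xs where path: "rtrancl_path (\<lambda>x y. (x, y) \<in> R) a xs b" and dxs: "distinct (a # xs)"
    using rtrancl_path_distinct by metis
  have xsne: "xs \<noteq> []" using path ab by (auto elim: rtrancl_path.cases)
  have lastb: "last xs = b" using rtrancl_path_last[OF path xsne] .
  have xsP: "set xs \<subseteq> P"
  proof
    fix z assume "z \<in> set xs"
    then have "Rangep (\<lambda>x y. (x, y) \<in> R) z" using rtrancl_path_Range[OF path] by blast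
    then show "z \<in> P" unfolding R_def by auto
  qed
  have aP: "a \<in> P" unfolding P_def using nth_in_take[OF ip i(1)] i(2) by simp
  have vP: "v \<notin> P"
  proof
    assume "v \<in> P"
    then obtain m where m: "m < p" "vs ! m = vs ! p" using p unfolding P_def by (auto simp: in_set_conv_nth)
    have "m < length vs" using m p by simp
    then have "m = p" using d p(1) m(2) nth_eq_iff_index_eq by metis
    then show False using \<open>m < p\<close> by simp
  qed
  have PU: "P \<subseteq> univ G" unfolding P_def using sv set_take_subset[of p vs] by simp
  define cs where "cs = v # a # xs"
  have "is_cycle G cs" unfolding is_cycle_def
  proof (intro conjI allI impI)
    show "3 \<le> length cs" using xsne unfolding cs_def by (cases xs) auto
    show "distinct cs" using dxs vP aP xsP unfolding cs_def by auto
    show "set cs \<subseteq> univ G" using inU aP xsP PU unfolding cs_def by auto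
    fix t assume t: "t < length cs"
    show "rel G 0 (cs ! t) (cs ! ((t + 1) mod length cs))"
    proof (cases "t = 0")
      case True
      have "rel G 0 v a" using sy e inU unfolding gsym_def by blast
      then show ?thesis using True xsne unfolding cs_def by simp
    next
      case False
      show ?thesis
      proof (cases "t = length cs - 1")
        case True
        have "cs ! t = last xs" using True xsne unfolding cs_def by (simp add: last_conv_nth)
        moreover have "(t + 1) mod length cs = 0"
        proof -
          have "t + 1 = length cs" using True t by simp
          then show ?thesis by simp
        qed
        ultimately show ?thesis using lastb e unfolding cs_def by simp
      next
        case False
        have tl: "t - 1 < length xs" using False t \<open>t \<noteq> 0\<close> unfolding cs_def by simp
        have "(t + 1) mod length cs = t + 1" using False t by simp
        moreover have "cs ! t = (a # xs) ! (t - 1)" "cs ! (t + 1) = xs ! (t - 1)"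
          using \<open>t \<noteq> 0\<close> unfolding cs_def by (cases t; simp)+
        moreover have "((a # xs) ! (t - 1), xs ! (t - 1)) \<in> R" using rtrancl_path_nth[OF path tl] by simp
        ultimately show ?thesis unfolding R_def edge_set_def by simp
      qed
    qed
  qed
  then show ?thesis by blast
qed


lemma pi1E_rel: "rel (apply_interp (pi1 (R 0 (V 0) (V 1)) cd) A) 0 [a] [b] \<longleftrightarrow> rel A 0 a b"
  unfolding pi1_rel by simp

definition pi_ac :: interp where "pi_ac = pi1 (R 0 (V 0) (V 1)) (\<lambda>_. [])"

lemma pi_ac_rel: "rel (apply_interp pi_ac A) 0 [a] [b] \<longleftrightarrow> rel A 0 a b"
  unfolding pi_ac_def by (rule pi1E_rel)

definition phi_ac :: fm where
  "phi_ac = Neg (Exi 0 (Exi 1 (Exi 2 (Conj (Lt (V 1) (V 0)) (Conj (Lt (V 2) (V 0))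
     (Conj (Ed (V 1) (V 0)) (Conj (Ed (V 2) (V 0)) (Neg (Eq (V 1) (V 2))))))))))"

lemma tid_ac: "tid (1, 0) finite_graphs acyclic_graphs"
proof (rule tid.basic, rule basic_tid_intro[where P = "\<lambda>G. \<not> (\<exists>cs. is_cycle G cs)" and \<phi> = phi_ac and n = 0])
  show "acyclic_graphs \<subseteq> finite_graphs" unfolding acyclic_graphs_def by blast
  show "wf_interp (1, 0) 0 pi_ac"
    unfolding wf_interp_def pi_ac_def pi1_def by simp
  show "sentence (2, 0) phi_ac" unfolding sentence_def phi_ac_def by auto
  show "\<forall>A\<in>finite_graphs. interp_defined 0 pi_ac A \<and> is_npgraph 0 (apply_interp pi_ac A)"
  proof
    fix A assume "A \<in> finite_graphs"
    then have g: "is_npgraph 0 A" unfolding finite_graphs_def by simp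
    have "interp_defined 0 pi_ac A" unfolding interp_defined_def by simp
    moreover have "is_npgraph 0 (apply_interp pi_ac A)"
    proof -
      have U: "univ (apply_interp pi_ac A) = (\<lambda>x. [x]) ` univ A" unfolding pi_ac_def by (rule pi1_univ)
      show ?thesis using g unfolding is_npgraph_def U by (auto simp: pi_ac_rel)
    qed
    ultimately show "interp_defined 0 pi_ac A \<and> is_npgraph 0 (apply_interp pi_ac A)" by blast
  qed
  fix G :: "'b list struc" and vs
  assume g: "is_npgraph 0 G" and tr: "is_traversal G vs"
  have "models (expand G vs) phi_ac \<longleftrightarrow> sat (expand G vs) (\<lambda>_. undefined) phi_ac"
    by (rule models_sentence) (auto simp: phi_ac_def)
  also have "\<dots> \<longleftrightarrow> \<not> has_fork G vs"
    unfolding phi_ac_def has_fork_def by simp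
  also have "\<dots> \<longleftrightarrow> \<not> (\<exists>cs. is_cycle G cs)"
    using cycle_fork[OF tr npgraph_gsym[OF g]] fork_cycle[OF tr npgraph_gsym[OF g]] by blast
  finally show "models (expand G vs) phi_ac \<longleftrightarrow> \<not> (\<exists>cs. is_cycle G cs)" .
next
  show "\<forall>A\<in>finite_graphs. A \<in> acyclic_graphs \<longleftrightarrow> \<not> (\<exists>cs. is_cycle (apply_interp pi_ac A) cs)"
  proof
    fix A assume A: "A \<in> finite_graphs"
    have U: "univ (apply_interp pi_ac A) = (\<lambda>x. [x]) ` univ A" unfolding pi_ac_def by (rule pi1_univ)
    have e: "rel (apply_interp pi_ac A) 0 [a] [b] \<longleftrightarrow> rel A 0 a b" for a b
      unfolding pi_ac_def by (rule pi1E_rel)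
    have "(\<exists>cs. is_cycle A cs) \<longleftrightarrow> (\<exists>cs. is_cycle (apply_interp pi_ac A) cs)"
    proof
      assume "\<exists>cs. is_cycle A cs"
      then obtain cs where "is_cycle A cs" by blast
      then have "is_cycle (apply_interp pi_ac A) (map (\<lambda>x. [x]) cs)"
        by (rule cycle_map) (auto simp: U e inj_on_def)
      then show "\<exists>cs. is_cycle (apply_interp pi_ac A) cs" by blast
    next
      assume "\<exists>cs. is_cycle (apply_interp pi_ac A) cs"
      then obtain cs where "is_cycle (apply_interp pi_ac A) cs" by blast
      then have "is_cycle A (map hd cs)"
        by (rule cycle_map) (auto simp: U e inj_on_def)
      then show "\<exists>cs. is_cycle A cs" by blast
    qed
    then show "A \<in> acyclic_graphs \<longleftrightarrow> \<not> (\<exists>cs. is_cycle (apply_interp pi_ac A) cs)"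
      using A unfolding acyclic_graphs_def by blast
  qed
qed

section \<open>Bipartiteness\<close>

abbreviation "EqV i j \<equiv> Eq (V i) (V j)"

definition bp_dfm :: fm where
  "bp_dfm = Disj
     (Conj (Neg (EqV 0 1)) (Disj (Conj (EqV 4 0) (Disj (EqV 3 0) (EqV 3 1)))
                                 (Conj (EqV 4 1) (Conj (Disj (EqV 2 0) (EqV 2 1)) (Disj (EqV 3 0) (EqV 3 1))))))
     (Conj (EqV 1 0) (Conj (EqV 2 0) (Conj (EqV 3 0) (EqV 4 0))))"

definition bp_efm :: fm where
  "bp_efm = Conj (Conj (EqV 0 5) (Conj (EqV 1 6) (Neg (EqV 0 1))))
     (Disj (Conj (EqV 4 0) (Conj (EqV 9 0) (Conj (Neg (EqV 3 8)) (R 0 (V 2) (V 7)))))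
     (Disj (Conj (EqV 4 1) (Conj (EqV 9 1) (Conj (EqV 2 7) (Neg (EqV 3 8)))))
     (Disj (Conj (EqV 4 1) (Conj (EqV 9 0) (Conj (EqV 7 0) (EqV 8 2))))
           (Conj (EqV 9 1) (Conj (EqV 4 0) (Conj (EqV 2 0) (EqV 3 7)))))))"

definition pi_bp :: interp where
  "pi_bp = \<lparr>arity = 5, dfm = bp_dfm, efm = bp_efm, cdefs = (\<lambda>_. [])\<rparr>"

definition bdom :: "'a \<Rightarrow> 'a \<Rightarrow> 'a \<Rightarrow> 'a \<Rightarrow> 'a \<Rightarrow> bool" where
  "bdom v w x y z \<longleftrightarrow> (v \<noteq> w \<and> (z = v \<and> (y = v \<or> y = w) \<or> z = w \<and> (x = v \<or> x = w) \<and> (y = v \<or> y = w)))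
     \<or> (w = v \<and> x = v \<and> y = v \<and> z = v)"

definition bedge :: "('a \<Rightarrow> 'a \<Rightarrow> bool) \<Rightarrow> 'a list \<Rightarrow> 'a list \<Rightarrow> bool" where
  "bedge E p q \<longleftrightarrow> p ! 0 = q ! 0 \<and> p ! 1 = q ! 1 \<and> p ! 0 \<noteq> p ! 1 \<and>
     ((p ! 4 = p ! 0 \<and> q ! 4 = p ! 0 \<and> p ! 3 \<noteq> q ! 3 \<and> E (p ! 2) (q ! 2)) \<or>
      (p ! 4 = p ! 1 \<and> q ! 4 = p ! 1 \<and> p ! 2 = q ! 2 \<and> p ! 3 \<noteq> q ! 3) \<or>
      (p ! 4 = p ! 1 \<and> q ! 4 = p ! 0 \<and> q ! 2 = p ! 0 \<and> q ! 3 = p ! 2) \<or>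
      (q ! 4 = p ! 1 \<and> p ! 4 = p ! 0 \<and> p ! 2 = p ! 0 \<and> p ! 3 = q ! 2))"

lemma tup_append5: "length p = 5 \<Longrightarrow> i < 10 \<Longrightarrow> tup (p @ q) i = (if i < 5 then p ! i else q ! (i - 5))"
  unfolding tup_def by (simp add: nth_append)

lemma bp_univ: "p \<in> univ (apply_interp pi_bp A) \<longleftrightarrow>
   length p = 5 \<and> set p \<subseteq> univ A \<and> bdom (p ! 0) (p ! 1) (p ! 2) (p ! 3) (p ! 4)"
  unfolding apply_interp_def pi_bp_def bp_dfm_def bdom_def tup_def by auto

lemma bp_rel: "length p = 5 \<Longrightarrow> length q = 5 \<Longrightarrow>
   rel (apply_interp pi_bp A) 0 p q \<longleftrightarrow> bedge (rel A 0) p q"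
  unfolding apply_interp_def pi_bp_def bp_efm_def bedge_def
  by (simp add: tup_append5 del: One_nat_def) (auto simp: numeral_eq_Suc)


lemma len5: "length p = 5 \<Longrightarrow> \<exists>a b c d e. p = [a, b, c, d, e]"
  by (simp add: numeral_eq_Suc length_Suc_conv) blast

lemma bp_univ5: "[v, w, x, y, z] \<in> univ (apply_interp pi_bp A) \<longleftrightarrow>
   v \<in> univ A \<and> w \<in> univ A \<and> x \<in> univ A \<and> y \<in> univ A \<and> z \<in> univ A \<and> bdom v w x y z"
  unfolding bp_univ by (simp add: numeral_eq_Suc)

lemma bp_univ_E: "p \<in> univ (apply_interp pi_bp A) \<Longrightarrow> \<exists>v w x y z. p = [v, w, x, y, z]"
  using len5 unfolding bp_univ by blast

lemma bp_rel5: "rel (apply_interp pi_bp A) 0 [v, w, x, y, z] [v', w', x', y', z'] \<longleftrightarrow>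
   v = v' \<and> w = w' \<and> v \<noteq> w \<and>
     ((z = v \<and> z' = v \<and> y \<noteq> y' \<and> rel A 0 x x') \<or>
      (z = w \<and> z' = w \<and> x = x' \<and> y \<noteq> y') \<or>
      (z = w \<and> z' = v \<and> x' = v \<and> y' = x) \<or>
      (z' = w \<and> z = v \<and> x = v \<and> y = x'))"
  by (subst bp_rel) (auto simp: bedge_def numeral_eq_Suc)


definition trih :: "'a struc \<Rightarrow> 'a \<Rightarrow> bool" where
  "trih G p \<longleftrightarrow> (\<exists>a\<in>univ G. \<exists>b\<in>univ G. rel G 0 p a \<and> rel G 0 p b \<and> rel G 0 a b)"

definition bcol :: "'a set \<Rightarrow> 'a list \<Rightarrow> bool" where
  "bcol X p = (if p ! 4 = p ! 0 then (p ! 2 \<in> X) \<noteq> (p ! 3 = p ! 1) else (p ! 0 \<in> X) \<noteq> (p ! 2 = p ! 1))"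

definition gcl :: "'a list \<Rightarrow> bool" where
  "gcl p \<longleftrightarrow> p ! 0 \<noteq> p ! 1 \<and> (p ! 4 = p ! 1 \<or> p ! 2 = p ! 0)"

definition gid :: "'a list \<Rightarrow> 'a" where
  "gid p = (if p ! 4 = p ! 1 then p ! 2 else p ! 3)"

lemma bp_inv:
  assumes col: "\<And>u v. u \<in> univ A \<Longrightarrow> v \<in> univ A \<Longrightarrow> rel A 0 u v \<Longrightarrow> (u \<in> X \<longleftrightarrow> v \<notin> X)"
    and pq: "(p, q) \<in> (edge_set (apply_interp pi_bp A))\<^sup>*"
  shows "p ! 0 = q ! 0 \<and> p ! 1 = q ! 1 \<and> bcol X p = bcol X q"
  using pq
proof (induction rule: rtrancl_induct)
  case base then show ?case by simp
next
  case (step y z)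
  then have y: "y \<in> univ (apply_interp pi_bp A)" and z: "z \<in> univ (apply_interp pi_bp A)"
    and e: "rel (apply_interp pi_bp A) 0 y z" unfolding edge_set_def by auto
  obtain v w x y0 z0 where yy: "y = [v, w, x, y0, z0]" using bp_univ_E[OF y] by blast
  obtain v' w' x' y0' z0' where zz: "z = [v', w', x', y0', z0']" using bp_univ_E[OF z] by blast
  have yd: "x \<in> univ A" "bdom v w x y0 z0" using y unfolding yy bp_univ5 by auto
  have zd: "x' \<in> univ A" "bdom v' w' x' y0' z0'" using z unfolding zz bp_univ5 by auto
  have ee: "v = v' \<and> w = w' \<and> v \<noteq> w \<and>
     ((z0 = v \<and> z0' = v \<and> y0 \<noteq> y0' \<and> rel A 0 x x') \<or>
      (z0 = w \<and> z0' = w \<and> x = x' \<and> y0 \<noteq> y0') \<or>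
      (z0 = w \<and> z0' = v \<and> x' = v \<and> y0' = x) \<or>
      (z0' = w \<and> z0 = v \<and> x = v \<and> y0 = x'))" using e unfolding yy zz bp_rel5 .
  have "rel A 0 x x' \<Longrightarrow> (x \<in> X \<longleftrightarrow> x' \<notin> X)" using col yd zd by blast
  then have "bcol X y = bcol X z" using ee yd(2) zd(2) unfolding yy zz bcol_def bdom_def by auto
  moreover have "y ! 0 = z ! 0 \<and> y ! 1 = z ! 1" using ee unfolding yy zz by simp
  ultimately show ?case using step.IH by simp
qed

lemma bp_tri_gcl:
  assumes p: "p \<in> univ (apply_interp pi_bp A)" and t: "trih (apply_interp pi_bp A) p"
  shows "gcl p"
proof (rule ccontr)
  assume ng: "\<not> gcl p"
  obtain a b where a: "a \<in> univ (apply_interp pi_bp A)" and b: "b \<in> univ (apply_interp pi_bp A)"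
    and pa: "rel (apply_interp pi_bp A) 0 p a" and pb: "rel (apply_interp pi_bp A) 0 p b"
    and ab: "rel (apply_interp pi_bp A) 0 a b" using t unfolding trih_def by blast
  obtain v w x y z where pp: "p = [v, w, x, y, z]" using bp_univ_E[OF p] by blast
  obtain va wa xa ya za where aa: "a = [va, wa, xa, ya, za]" using bp_univ_E[OF a] by blast
  obtain vb wb xb yb zb where bb: "b = [vb, wb, xb, yb, zb]" using bp_univ_E[OF b] by blast
  have pd: "bdom v w x y z" using p unfolding pp bp_univ5 by auto
  have ad: "bdom va wa xa ya za" using a unfolding aa bp_univ5 by auto
  have bd: "bdom vb wb xb yb zb" using b unfolding bb bp_univ5 by auto
  have ng': "v \<noteq> w" "z \<noteq> w" "x \<noteq> v" using ng pa unfolding gcl_def pp aa bp_rel5 by auto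
  then have zv: "z = v" using pd unfolding bdom_def by auto
  have pa': "va = v \<and> wa = w \<and> za = v \<and> ya \<noteq> y" using pa ng' zv unfolding pp aa bp_rel5 by auto
  have pb': "vb = v \<and> wb = w \<and> zb = v \<and> yb \<noteq> y" using pb ng' zv unfolding pp bb bp_rel5 by auto
  have "ya = yb" using pa' pb' pd ad bd ng' unfolding bdom_def by auto
  then show False using ab pa' pb' ng' unfolding aa bb bp_rel5 by auto
qed

lemma bp_gcl_adj:
  assumes p: "p \<in> univ (apply_interp pi_bp A)" and q: "q \<in> univ (apply_interp pi_bp A)"
    and gp: "gcl p" and gq: "gcl q" and k: "p ! 0 = q ! 0" "p ! 1 = q ! 1"
    and g: "gid p = gid q" and ne: "p \<noteq> q"
  shows "rel (apply_interp pi_bp A) 0 p q"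
proof -
  obtain v w x y z where pp: "p = [v, w, x, y, z]" using bp_univ_E[OF p] by blast
  obtain v' w' x' y' z' where qq: "q = [v', w', x', y', z']" using bp_univ_E[OF q] by blast
  have pd: "bdom v w x y z" using p unfolding pp bp_univ5 by auto
  have qd: "bdom v' w' x' y' z'" using q unfolding qq bp_univ5 by auto
  show ?thesis using pd qd gp gq k g ne unfolding pp qq bp_rel5 bdom_def gcl_def gid_def by auto
qed

lemma bp_gcl_col:
  assumes p: "p \<in> univ (apply_interp pi_bp A)" and gp: "gcl p"
  shows "bcol X p = ((p ! 0 \<in> X) \<noteq> (gid p = p ! 1)) \<and> (gid p = p ! 0 \<or> gid p = p ! 1)"
proof -
  obtain v w x y z where pp: "p = [v, w, x, y, z]" using bp_univ_E[OF p] by blast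
  have pd: "bdom v w x y z" using p unfolding pp bp_univ5 by auto
  show ?thesis using pd gp unfolding pp bdom_def gcl_def gid_def bcol_def by auto
qed

definition Pbp :: "'a struc \<Rightarrow> bool" where
  "Pbp G \<longleftrightarrow> (\<exists>p\<in>univ G. \<exists>q\<in>univ G. trih G p \<and> trih G q \<and> p \<noteq> q \<and> \<not> rel G 0 p q \<and>
      (p, q) \<in> (edge_set G)\<^sup>*)"

lemma bip_not_Pbp:
  assumes col: "\<And>u v. u \<in> univ A \<Longrightarrow> v \<in> univ A \<Longrightarrow> rel A 0 u v \<Longrightarrow> (u \<in> X \<longleftrightarrow> v \<notin> X)"
  shows "\<not> Pbp (apply_interp pi_bp A)"
proof
  assume "Pbp (apply_interp pi_bp A)"
  then obtain p q where p: "p \<in> univ (apply_interp pi_bp A)" and q: "q \<in> univ (apply_interp pi_bp A)"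
    and tp: "trih (apply_interp pi_bp A) p" and tq: "trih (apply_interp pi_bp A) q"
    and ne: "p \<noteq> q" and na: "\<not> rel (apply_interp pi_bp A) 0 p q"
    and c: "(p, q) \<in> (edge_set (apply_interp pi_bp A))\<^sup>*" unfolding Pbp_def by blast
  have inv: "p ! 0 = q ! 0 \<and> p ! 1 = q ! 1 \<and> bcol X p = bcol X q" using bp_inv[OF col c] by blast
  have gp: "gcl p" and gq: "gcl q" using bp_tri_gcl p q tp tq by blast+
  have "gid p \<noteq> gid q" using bp_gcl_adj[OF p q gp gq] inv ne na by blast
  moreover have "bcol X p = ((p ! 0 \<in> X) \<noteq> (gid p = p ! 1))" "gid p = p ! 0 \<or> gid p = p ! 1"
    using bp_gcl_col[OF p gp] by auto
  moreover have "bcol X q = ((q ! 0 \<in> X) \<noteq> (gid q = q ! 1))" "gid q = q ! 0 \<or> gid q = q ! 1"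
    using bp_gcl_col[OF q gq] by auto
  moreover have "p ! 0 \<noteq> p ! 1" using gp unfolding gcl_def by simp
  ultimately show False using inv by auto
qed

definition bde :: "'a struc \<Rightarrow> (('a \<times> bool) \<times> ('a \<times> bool)) set" where
  "bde A = {((x, i), (x', i')). x \<in> univ A \<and> x' \<in> univ A \<and> rel A 0 x x' \<and> i \<noteq> i'}"

lemma bde_sym: "gsym A \<Longrightarrow> sym (bde A)"
  unfolding gsym_def bde_def sym_def by auto

lemma bde_reach:
  assumes "(r, x) \<in> (edge_set A)\<^sup>*"
  shows "((r, False), (x, False)) \<in> (bde A)\<^sup>* \<or> ((r, False), (x, True)) \<in> (bde A)\<^sup>*"
  using assms
proof (induction rule: rtrancl_induct)
  case base then show ?case by simp
next
  case (step y z)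
  then have yz: "y \<in> univ A" "z \<in> univ A" "rel A 0 y z" unfolding edge_set_def by auto
  from step.IH obtain b where b: "((r, False), (y, b)) \<in> (bde A)\<^sup>*" by blast
  have "((y, b), (z, \<not> b)) \<in> bde A" using yz unfolding bde_def by auto
  then have "((r, False), (z, \<not> b)) \<in> (bde A)\<^sup>*" using b by (rule rtrancl_into_rtrancl[rotated])
  then show ?case by (cases b) auto
qed

lemma no_odd_bipartite:
  assumes g: "is_npgraph 0 A"
    and H: "\<forall>v\<in>univ A. ((v, False), (v, True)) \<notin> (bde A)\<^sup>*"
  shows "\<exists>X\<subseteq>univ A. \<forall>u\<in>univ A. \<forall>v\<in>univ A. rel A 0 u v \<longrightarrow> (u \<in> X \<longleftrightarrow> v \<notin> X)"
proof -
  have sy: "gsym A" using npgraph_gsym[OF g] .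
  have sE: "sym (edge_set A)" using edge_set_sym[OF sy] .
  have sD: "sym (bde A)" using bde_sym[OF sy] .
  define rep where "rep x = (SOME r. r \<in> univ A \<and> (r, x) \<in> (edge_set A)\<^sup>*)" for x
  define X where "X = {x \<in> univ A. ((rep x, False), (x, False)) \<in> (bde A)\<^sup>*}"
  have repP: "rep x \<in> univ A \<and> (rep x, x) \<in> (edge_set A)\<^sup>*" if "x \<in> univ A" for x
    unfolding rep_def by (rule someI[of _ x]) (use that in simp)
  have "rel A 0 u v \<longrightarrow> (u \<in> X \<longleftrightarrow> v \<notin> X)" if u: "u \<in> univ A" and v: "v \<in> univ A" for u v
  proof
    assume uv: "rel A 0 u v"
    have vu: "rel A 0 v u" using sy uv u v unfolding gsym_def by blast
    have euv: "(u, v) \<in> edge_set A" "(v, u) \<in> edge_set A" using u v uv vu unfolding edge_set_def by auto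
    have "(\<lambda>r. r \<in> univ A \<and> (r, u) \<in> (edge_set A)\<^sup>*) = (\<lambda>r. r \<in> univ A \<and> (r, v) \<in> (edge_set A)\<^sup>*)"
    proof (intro ext iffI)
      fix r assume "r \<in> univ A \<and> (r, u) \<in> (edge_set A)\<^sup>*"
      then show "r \<in> univ A \<and> (r, v) \<in> (edge_set A)\<^sup>*" using euv(1) by (auto intro: rtrancl_into_rtrancl)
    next
      fix r assume "r \<in> univ A \<and> (r, v) \<in> (edge_set A)\<^sup>*"
      then show "r \<in> univ A \<and> (r, u) \<in> (edge_set A)\<^sup>*" using euv(2) by (auto intro: rtrancl_into_rtrancl)
    qed
    then have rr: "rep u = rep v" unfolding rep_def by simp
    define r where "r = rep u"
    have ru: "(r, u) \<in> (edge_set A)\<^sup>*" and rv: "(r, v) \<in> (edge_set A)\<^sup>*"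
      using repP[OF u] repP[OF v] rr unfolding r_def by auto
    have d1: "((v, b), (u, \<not> b)) \<in> bde A" for b using u v vu unfolding bde_def by auto
    have d2: "((u, b), (v, \<not> b)) \<in> bde A" for b using u v uv unfolding bde_def by auto
    have contra: "False" if "((r, False), (u, False)) \<in> (bde A)\<^sup>*" "((r, False), (u, True)) \<in> (bde A)\<^sup>*"
    proof -
      have "((u, False), (r, False)) \<in> (bde A)\<^sup>*" using rtrancl_sym_flip[OF sD that(1)] .
      then have "((u, False), (u, True)) \<in> (bde A)\<^sup>*" using that(2) by (rule rtrancl_trans)
      then show False using H u by blast
    qed
    show "u \<in> X \<longleftrightarrow> v \<notin> X"
    proof
      assume uX: "u \<in> X"
      then have a: "((r, False), (u, False)) \<in> (bde A)\<^sup>*" unfolding X_def r_def by simp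
      show "v \<notin> X"
      proof
        assume "v \<in> X"
        then have "((r, False), (v, False)) \<in> (bde A)\<^sup>*" unfolding X_def r_def using rr by simp
        then have "((r, False), (u, True)) \<in> (bde A)\<^sup>*" using d1[of False] by (auto intro: rtrancl_into_rtrancl)
        then show False using contra a by blast
      qed
    next
      assume vX: "v \<notin> X"
      show "u \<in> X"
      proof (rule ccontr)
        assume uX: "u \<notin> X"
        have "((r, False), (u, True)) \<in> (bde A)\<^sup>*" using uX bde_reach[OF ru] u unfolding X_def r_def by auto
        moreover have "((r, False), (v, True)) \<in> (bde A)\<^sup>*" using vX bde_reach[OF rv] v rr unfolding X_def r_def by auto
        then have "((r, False), (u, False)) \<in> (bde A)\<^sup>*" using d1[of True] by (auto intro: rtrancl_into_rtrancl)
        ultimately show False using contra by blast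
      qed
    qed
  qed
  moreover have "X \<subseteq> univ A" unfolding X_def by blast
  ultimately show ?thesis by blast
qed


definition emb :: "'a \<Rightarrow> 'a \<Rightarrow> 'a \<times> bool \<Rightarrow> 'a list" where
  "emb v w xi = [v, w, fst xi, if snd xi then w else v, v]"

lemma bde_lift:
  assumes vw: "v \<noteq> w" "v \<in> univ A" "w \<in> univ A"
    and ab: "(a, b) \<in> (bde A)\<^sup>*"
  shows "(emb v w a, emb v w b) \<in> (edge_set (apply_interp pi_bp A))\<^sup>*"
  using ab
proof (induction rule: rtrancl_induct)
  case base then show ?case by simp
next
  case (step y z)
  obtain x i x' i' where yz: "y = (x, i)" "z = (x', i')" by (cases y, cases z) auto
  have d: "x \<in> univ A" "x' \<in> univ A" "rel A 0 x x'" "i \<noteq> i'" using step(2) unfolding yz bde_def by auto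
  have "(emb v w y, emb v w z) \<in> edge_set (apply_interp pi_bp A)"
    unfolding edge_set_def yz emb_def using d vw by (auto simp: bp_univ5 bp_rel5 bdom_def)
  then show ?case using step.IH by (rule rtrancl_into_rtrancl[rotated])
qed

lemma nonbip_Pbp:
  assumes g: "is_npgraph 0 A"
    and nb: "\<not> (\<exists>X\<subseteq>univ A. \<forall>u\<in>univ A. \<forall>v\<in>univ A. rel A 0 u v \<longrightarrow> (u \<in> X \<longleftrightarrow> v \<notin> X))"
  shows "Pbp (apply_interp pi_bp A)"
proof -
  obtain v where v: "v \<in> univ A" and c: "((v, False), (v, True)) \<in> (bde A)\<^sup>*"
    using no_odd_bipartite[OF g] nb by blast
  obtain w where w: "w \<in> univ A" "rel A 0 v w"
  proof (rule converse_rtranclE[OF c])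
    assume "(v, False) = (v, True)" then show thesis by simp
  next
    fix y assume "((v, False), y) \<in> bde A"
    then show thesis using that unfolding bde_def by auto
  qed
  have vw: "v \<noteq> w" using w g v unfolding is_npgraph_def by auto
  define H where "H = apply_interp pi_bp A"
  define p where "p = [v, w, v, v, v]"
  define q where "q = [v, w, v, w, v]"
  have pe: "p = emb v w (v, False)" "q = emb v w (v, True)" unfolding p_def q_def emb_def by auto
  have pq: "(p, q) \<in> (edge_set H)\<^sup>*" unfolding pe H_def by (rule bde_lift[OF vw v w(1) c])
  have U: "[v, w, v, v, v] \<in> univ H" "[v, w, v, w, v] \<in> univ H" "[v, w, v, v, w] \<in> univ H"
    "[v, w, v, w, w] \<in> univ H" "[v, w, w, v, w] \<in> univ H" "[v, w, w, w, w] \<in> univ H"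
    unfolding H_def bp_univ5 bdom_def using v w vw by auto
  have "trih H p" unfolding trih_def p_def
    using U vw by (intro bexI[of _ "[v, w, v, v, w]"] bexI[of _ "[v, w, v, w, w]"]) (auto simp: H_def bp_rel5)
  moreover have "trih H q" unfolding trih_def q_def
    using U vw by (intro bexI[of _ "[v, w, w, v, w]"] bexI[of _ "[v, w, w, w, w]"]) (auto simp: H_def bp_rel5)
  moreover have "p \<noteq> q" "\<not> rel H 0 p q" unfolding p_def q_def H_def using vw g v
    by (auto simp: bp_rel5 is_npgraph_def)
  ultimately show ?thesis unfolding Pbp_def using U pq unfolding p_def q_def H_def by blast
qed

definition TR :: "nat \<Rightarrow> fm" where
  "TR k = Exi 2 (Exi 3 (Conj (Ed (V k) (V 2)) (Conj (Ed (V k) (V 3)) (Ed (V 2) (V 3)))))"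

definition phi_bp :: fm where
  "phi_bp = Exi 0 (Exi 1 (Conj (TR 0) (Conj (TR 1) (Conj (Neg (EqV 0 1))
     (Conj (Neg (Ed (V 0) (V 1))) (SCf (V 0) (V 1) 4 5))))))"

lemma sat_TR: "k < 2 \<Longrightarrow> sat (expand G vs) \<sigma> (TR k) \<longleftrightarrow> trih G (\<sigma> k)"
  unfolding TR_def trih_def by (cases k) auto

lemma phi_bp_char:
  assumes g: "is_npgraph 0 G" and tr: "is_traversal G vs"
  shows "models (expand G vs) phi_bp \<longleftrightarrow> Pbp G"
proof -
  have "models (expand G vs) phi_bp \<longleftrightarrow> sat (expand G vs) (\<lambda>_. undefined) phi_bp"
    by (rule models_sentence) (auto simp: phi_bp_def TR_def fv_SCf)
  also have "\<dots> \<longleftrightarrow> (\<exists>p\<in>univ G. \<exists>q\<in>univ G. trih G p \<and> trih G q \<and> p \<noteq> q \<and> \<not> rel G 0 p q \<and>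
      conn_sem G vs p q)"
    unfolding phi_bp_def by (simp add: sat_TR sat_SCf)
  also have "\<dots> \<longleftrightarrow> Pbp G"
    unfolding Pbp_def using conn_sem_iff[OF tr npgraph_gsym[OF g]] by blast
  finally show ?thesis .
qed

definition NB :: "nat struc set" where "NB = {A \<in> finite_graphs. A \<notin> bipartite_graphs}"

lemma bp_npgraph:
  assumes g: "is_npgraph 0 A"
  shows "is_npgraph 0 (apply_interp pi_bp A)"
proof -
  define H where "H = apply_interp pi_bp A"
  have "univ H \<subseteq> {xs. set xs \<subseteq> univ A \<and> length xs = 5}" by (auto simp: H_def bp_univ)
  moreover have "finite {xs. set xs \<subseteq> univ A \<and> length xs = 5}"
    using g finite_lists_length_eq unfolding is_npgraph_def by blast
  ultimately have fin: "finite (univ H)" by (rule finite_subset)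
  obtain u where u: "u \<in> univ A" using g unfolding is_npgraph_def by blast
  have "[u, u, u, u, u] \<in> univ H" unfolding H_def bp_univ5 bdom_def using u by simp
  then have ne: "univ H \<noteq> {}" by blast
  have sy: "rel H 0 q p" if hp: "p \<in> univ H" and hq: "q \<in> univ H" and he: "rel H 0 p q" for p q
  proof -
    obtain v w x y z where pp: "p = [v, w, x, y, z]" using bp_univ_E hp unfolding H_def by blast
    obtain v' w' x' y' z' where qq: "q = [v', w', x', y', z']" using bp_univ_E hq unfolding H_def by blast
    have "x \<in> univ A" "x' \<in> univ A" using hp hq unfolding pp qq H_def bp_univ5 by auto
    then show ?thesis using he g unfolding H_def pp qq bp_rel5 is_npgraph_def by auto
  qed
  have irr: "\<not> rel H 0 p p" if hp: "p \<in> univ H" for p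
  proof -
    obtain v w x y z where pp: "p = [v, w, x, y, z]" using bp_univ_E hp unfolding H_def by blast
    have "x \<in> univ A" using hp unfolding pp H_def bp_univ5 by auto
    then show ?thesis using g unfolding H_def pp bp_rel5 is_npgraph_def by auto
  qed
  show ?thesis unfolding H_def[symmetric] is_npgraph_def using fin ne sy irr by blast
qed

lemma tid_bp: "tid (1, 0) finite_graphs bipartite_graphs"
proof -
  have "basic_tid (1, 0) finite_graphs NB"
  proof (rule basic_tid_intro[where P = Pbp and \<phi> = phi_bp and n = 0 and \<pi> = pi_bp])
    show "NB \<subseteq> finite_graphs" unfolding NB_def by blast
    show "wf_interp (1, 0) 0 pi_bp"
      unfolding wf_interp_def pi_bp_def bp_dfm_def bp_efm_def by simp
    show "sentence (2, 0) phi_bp" unfolding sentence_def phi_bp_def TR_def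
      by (auto simp: fv_SCf wf_SCf)
    show "\<forall>A\<in>finite_graphs. interp_defined 0 pi_bp A \<and> is_npgraph 0 (apply_interp pi_bp A)"
      unfolding finite_graphs_def interp_defined_def using bp_npgraph by auto
    show "\<And>G vs. is_npgraph 0 G \<Longrightarrow> is_traversal G vs \<Longrightarrow> models (expand G vs) phi_bp = Pbp G"
      by (rule phi_bp_char)
    show "\<forall>A\<in>finite_graphs. (A \<in> NB) = Pbp (apply_interp pi_bp A)"
    proof
      fix A assume A: "A \<in> finite_graphs"
      then have g: "is_npgraph 0 A" unfolding finite_graphs_def by simp
      show "(A \<in> NB) = Pbp (apply_interp pi_bp A)"
      proof
        assume "A \<in> NB"
        then have "\<not> (\<exists>X\<subseteq>univ A. \<forall>u\<in>univ A. \<forall>v\<in>univ A. rel A 0 u v \<longrightarrow> (u \<in> X \<longleftrightarrow> v \<notin> X))"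
          using A unfolding NB_def bipartite_graphs_def by blast
        then show "Pbp (apply_interp pi_bp A)" using nonbip_Pbp[OF g] by blast
      next
        assume P: "Pbp (apply_interp pi_bp A)"
        show "A \<in> NB"
        proof (rule ccontr)
          assume "A \<notin> NB"
          then obtain X where "X \<subseteq> univ A" and col: "\<forall>u\<in>univ A. \<forall>v\<in>univ A. rel A 0 u v \<longrightarrow> (u \<in> X \<longleftrightarrow> v \<notin> X)"
            using A unfolding NB_def bipartite_graphs_def by blast
          then have "\<not> Pbp (apply_interp pi_bp A)" using bip_not_Pbp[of A X] by blast
          then show False using P by blast
        qed
      qed
    qed
  qed
  then have "tid (1, 0) finite_graphs (finite_graphs - NB)" by (intro tid.compl tid.basic)
  moreover have "finite_graphs - NB = bipartite_graphs"
    unfolding NB_def bipartite_graphs_def by blast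
  ultimately show ?thesis by simp
qed

section \<open>Ranks in finite linear orders\<close>

locale lo =
  fixes A :: "'a struc"
  assumes fin: "finite (univ A)" and ne: "univ A \<noteq> {}"
    and irr: "\<And>x. x \<in> univ A \<Longrightarrow> \<not> rel A 0 x x"
    and trans: "\<And>x y z. x \<in> univ A \<Longrightarrow> y \<in> univ A \<Longrightarrow> z \<in> univ A \<Longrightarrow> rel A 0 x y \<Longrightarrow> rel A 0 y z \<Longrightarrow> rel A 0 x z"
    and total: "\<And>x y. x \<in> univ A \<Longrightarrow> y \<in> univ A \<Longrightarrow> x = y \<or> rel A 0 x y \<or> rel A 0 y x"
begin

abbreviation "U \<equiv> univ A"
abbreviation "n \<equiv> card U"

definition rk :: "'a \<Rightarrow> nat" where "rk x = card {y \<in> U. rel A 0 y x}"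

lemma rk_lt_n: "x \<in> U \<Longrightarrow> rk x < n"
proof -
  assume x: "x \<in> U"
  have "{y \<in> U. rel A 0 y x} \<subset> U" using x irr by auto
  then show ?thesis unfolding rk_def using fin psubset_card_mono by blast
qed

lemma rk_mono: "x \<in> U \<Longrightarrow> y \<in> U \<Longrightarrow> rel A 0 x y \<Longrightarrow> rk x < rk y"
proof -
  assume x: "x \<in> U" and y: "y \<in> U" and xy: "rel A 0 x y"
  have "{z \<in> U. rel A 0 z x} \<subset> {z \<in> U. rel A 0 z y}"
  proof
    show "{z \<in> U. rel A 0 z x} \<subseteq> {z \<in> U. rel A 0 z y}" using trans x y xy by blast
    show "{z \<in> U. rel A 0 z x} \<noteq> {z \<in> U. rel A 0 z y}" using x xy irr by blast
  qed
  moreover have "finite {z \<in> U. rel A 0 z y}" using fin by simp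
  ultimately show ?thesis unfolding rk_def using psubset_card_mono by blast
qed

lemma rk_less_iff: "x \<in> U \<Longrightarrow> y \<in> U \<Longrightarrow> rel A 0 x y \<longleftrightarrow> rk x < rk y"
  using rk_mono total by (metis less_asym less_irrefl)

lemma rk_eq_iff: "x \<in> U \<Longrightarrow> y \<in> U \<Longrightarrow> rk x = rk y \<longleftrightarrow> x = y"
  using rk_mono total by (metis less_irrefl)

lemma rk_inj: "inj_on rk U"
  using rk_eq_iff by (auto simp: inj_on_def)

lemma rk_img: "rk ` U = {..<n}"
proof -
  have sub: "rk ` U \<subseteq> {..<n}" using rk_lt_n by auto
  have "card (rk ` U) = n" using card_image[OF rk_inj] .
  then show ?thesis using card_seteq[OF _ sub] by simp
qed

definition pre :: "nat \<Rightarrow> 'a" where "pre i = inv_into U rk i"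

lemma pre: "i < n \<Longrightarrow> pre i \<in> U \<and> rk (pre i) = i"
  unfolding pre_def using rk_img by (metis f_inv_into_f inv_into_into lessThan_iff)

definition S2 :: "'a \<Rightarrow> 'a \<Rightarrow> bool" where
  "S2 a b \<longleftrightarrow> (\<exists>c\<in>U. rel A 0 a c \<and> rel A 0 c b \<and> \<not> (\<exists>d\<in>U. rel A 0 a d \<and> rel A 0 d b \<and> d \<noteq> c))"

lemma S2_iff: "a \<in> U \<Longrightarrow> b \<in> U \<Longrightarrow> S2 a b \<longleftrightarrow> rk b = rk a + 2"
proof
  assume a: "a \<in> U" and b: "b \<in> U" and s: "S2 a b"
  then obtain c where c: "c \<in> U" "rk a < rk c" "rk c < rk b"
    and u: "\<And>d. d \<in> U \<Longrightarrow> rk a < rk d \<Longrightarrow> rk d < rk b \<Longrightarrow> d = c"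
    unfolding S2_def using rk_less_iff by blast
  show "rk b = rk a + 2"
  proof (rule ccontr)
    assume "rk b \<noteq> rk a + 2"
    then have big: "rk a + 2 < rk b" using c by simp
    have bn: "rk b < n" using rk_lt_n b by simp
    have e1: "pre (rk a + 1) \<in> U" "rk (pre (rk a + 1)) = rk a + 1" using pre[of "rk a + 1"] big bn by auto
    have e2: "pre (rk a + 2) \<in> U" "rk (pre (rk a + 2)) = rk a + 2" using pre[of "rk a + 2"] big bn by auto
    have "pre (rk a + 1) = c" using u[OF e1(1)] e1(2) big by simp
    moreover have "pre (rk a + 2) = c" using u[OF e2(1)] e2(2) big by simp
    ultimately show False using e1(2) e2(2) by simp
  qed
next
  assume a: "a \<in> U" and b: "b \<in> U" and r: "rk b = rk a + 2"
  have bn: "rk b < n" using rk_lt_n b by simp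
  define c where "c = pre (rk a + 1)"
  have c: "c \<in> U" "rk c = rk a + 1" using pre[of "rk a + 1"] r bn unfolding c_def by auto
  have "rel A 0 a c" "rel A 0 c b" using rk_less_iff a b c r by auto
  moreover have "\<not> (\<exists>d\<in>U. rel A 0 a d \<and> rel A 0 d b \<and> d \<noteq> c)"
  proof
    assume "\<exists>d\<in>U. rel A 0 a d \<and> rel A 0 d b \<and> d \<noteq> c"
    then obtain d where d: "d \<in> U" "rk a < rk d" "rk d < rk b" "d \<noteq> c" using rk_less_iff a b by blast
    then have "rk d = rk c" using c r by simp
    then show False using rk_eq_iff d c by blast
  qed
  ultimately show "S2 a b" unfolding S2_def using c by blast
qed

lemma first_iff: "a \<in> U \<Longrightarrow> (\<not> (\<exists>d\<in>U. rel A 0 d a)) \<longleftrightarrow> rk a = 0"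
proof
  assume a: "a \<in> U" and h: "\<not> (\<exists>d\<in>U. rel A 0 d a)"
  show "rk a = 0"
  proof (rule ccontr)
    assume "rk a \<noteq> 0"
    then have "pre 0 \<in> U" "rk (pre 0) < rk a" using pre[of 0] rk_lt_n[OF a] by auto
    then show False using h rk_less_iff a by blast
  qed
next
  assume a: "a \<in> U" and "rk a = 0"
  then show "\<not> (\<exists>d\<in>U. rel A 0 d a)" using rk_less_iff by auto
qed

lemma last_iff: "a \<in> U \<Longrightarrow> (\<not> (\<exists>d\<in>U. rel A 0 a d)) \<longleftrightarrow> rk a = n - 1"
proof
  assume a: "a \<in> U" and h: "\<not> (\<exists>d\<in>U. rel A 0 a d)"
  show "rk a = n - 1"
  proof (rule ccontr)
    assume "rk a \<noteq> n - 1"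
    then have "rk a < n - 1" using rk_lt_n[OF a] by simp
    then have "pre (n - 1) \<in> U" "rk a < rk (pre (n - 1))" using pre[of "n - 1"] by auto
    then show False using h rk_less_iff a by blast
  qed
next
  assume a: "a \<in> U" and "rk a = n - 1"
  then show "\<not> (\<exists>d\<in>U. rel A 0 a d)" using rk_less_iff rk_lt_n by fastforce
qed

end


definition RG :: "nat \<Rightarrow> nat \<Rightarrow> nat \<Rightarrow> bool" where
  "RG n i j \<longleftrightarrow> j = i + 2 \<or> i = j + 2 \<or> (i \<noteq> j \<and> (i = 0 \<and> j = n - 1 \<or> j = 0 \<and> i = n - 1))"

definition RGs :: "nat \<Rightarrow> nat struc" where
  "RGs n = \<lparr>univ = {..<n}, rel = (\<lambda>_ i j. RG n i j), cst = (\<lambda>_. 0)\<rparr>"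

lemma RGs_edge: "(i, j) \<in> edge_set (RGs n) \<longleftrightarrow> i < n \<and> j < n \<and> RG n i j"
  unfolding edge_set_def RGs_def by simp

lemma RG_even_conn:
  assumes ev: "even n" and n2: "2 \<le> n" and i: "i < n" and j: "j < n"
  shows "(i, j) \<in> (edge_set (RGs n))\<^sup>*"
proof -
  let ?E = "edge_set (RGs n)"
  have symE: "sym ?E" unfolding sym_def RGs_edge RG_def by auto
  have evr: "2 * k < n \<longrightarrow> (0, 2 * k) \<in> ?E\<^sup>*" for k
  proof (induction k)
    case 0 then show ?case by simp
  next
    case (Suc k)
    show ?case
    proof
      assume "2 * Suc k < n"
      then have "(2 * k, 2 * Suc k) \<in> ?E" unfolding RGs_edge RG_def by simp
      moreover have "(0, 2 * k) \<in> ?E\<^sup>*" using Suc \<open>2 * Suc k < n\<close> by simp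
      ultimately show "(0, 2 * Suc k) \<in> ?E\<^sup>*" by (meson rtrancl_into_rtrancl)
    qed
  qed
  have odr: "\<forall>m. m < n \<longrightarrow> n - 1 - m = 2 * k \<longrightarrow> (0, m) \<in> ?E\<^sup>*" for k
  proof (induction k)
    case 0
    show ?case
    proof (intro allI impI)
      fix m assume m: "m < n" "n - 1 - m = 2 * 0"
      then have mm: "m = n - 1" by simp
      have "(0, n - 1) \<in> ?E" unfolding RGs_edge RG_def using n2 by simp
      then show "(0, m) \<in> ?E\<^sup>*" unfolding mm by (rule r_into_rtrancl)
    qed
  next
    case (Suc k)
    show ?case
    proof (intro allI impI)
      fix m assume m: "m < n" "n - 1 - m = 2 * Suc k"
      then have m2: "m + 2 < n" "n - 1 - (m + 2) = 2 * k" by simp_all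
      then have "(0, m + 2) \<in> ?E\<^sup>*" using Suc.IH by blast
      moreover have "(m + 2, m) \<in> ?E" unfolding RGs_edge RG_def using m2 by simp
      ultimately show "(0, m) \<in> ?E\<^sup>*" by (rule rtrancl_into_rtrancl)
    qed
  qed
  have all: "(0, m) \<in> ?E\<^sup>*" if m: "m < n" for m
  proof (cases "even m")
    case True
    then obtain k where "m = 2 * k" by blast
    then show ?thesis using evr m by simp
  next
    case False
    define k where "k = (n - 1 - m) div 2"
    have e: "even (n - 1 - m)" using False ev m by (simp add: even_diff_nat)
    then have "n - 1 - m = 2 * k" unfolding k_def by simp
    then show ?thesis using odr m by blast
  qed
  have "(i, 0) \<in> ?E\<^sup>*" using rtrancl_sym_flip[OF symE all[OF i]] .
  then show ?thesis using all[OF j] by (rule rtrancl_trans)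
qed

lemma RG_odd_disc:
  assumes od: "odd n"
  shows "(0, j) \<in> (edge_set (RGs n))\<^sup>* \<Longrightarrow> even j"
proof (induction rule: rtrancl_induct)
  case base then show ?case by simp
next
  case (step y z)
  then show ?case using od unfolding RGs_edge RG_def by auto
qed

lemma RG_conn:
  assumes n1: "1 \<le> n"
  shows "(2 \<le> n \<and> (\<forall>i<n. \<forall>j<n. (i, j) \<in> (edge_set (RGs n))\<^sup>*)) \<longleftrightarrow> even n"
proof
  assume h: "2 \<le> n \<and> (\<forall>i<n. \<forall>j<n. (i, j) \<in> (edge_set (RGs n))\<^sup>*)"
  show "even n"
  proof (rule ccontr)
    assume "odd n"
    moreover have "(0, 1) \<in> (edge_set (RGs n))\<^sup>*" using h by simp
    ultimately show False using RG_odd_disc by fastforce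
  qed
next
  assume ev: "even n"
  then have "2 \<le> n" using n1 by (metis One_nat_def Suc_1 Suc_leI le_neq_implies_less odd_one)
  then show "2 \<le> n \<and> (\<forall>i<n. \<forall>j<n. (i, j) \<in> (edge_set (RGs n))\<^sup>*)" using RG_even_conn ev by blast
qed


definition succ2f :: "trm \<Rightarrow> trm \<Rightarrow> fm" where
  "succ2f a b = Exi 2 (Conj (R 0 a (V 2)) (Conj (R 0 (V 2) b)
     (Neg (Exi 3 (Conj (R 0 a (V 3)) (Conj (R 0 (V 3) b) (Neg (EqV 3 2))))))))"

definition ev_efm :: fm where
  "ev_efm = Disj (succ2f (V 0) (V 1)) (Disj (succ2f (V 1) (V 0))
     (Conj (Neg (EqV 0 1)) (Disj (Conj (Neg (Exi 3 (R 0 (V 3) (V 0)))) (Neg (Exi 3 (R 0 (V 1) (V 3)))))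
                                 (Conj (Neg (Exi 3 (R 0 (V 3) (V 1)))) (Neg (Exi 3 (R 0 (V 0) (V 3))))))))"

definition pi_ev :: interp where "pi_ev = pi1 ev_efm (\<lambda>_. [])"

lemma (in lo) S2_sat: "i < 2 \<Longrightarrow> j < 2 \<Longrightarrow> sat A \<sigma> (succ2f (V i) (V j)) \<longleftrightarrow> S2 (\<sigma> i) (\<sigma> j)"
  unfolding succ2f_def S2_def by auto

lemma (in lo) ev_rel: "a \<in> U \<Longrightarrow> b \<in> U \<Longrightarrow> rel (apply_interp pi_ev A) 0 [a] [b] \<longleftrightarrow> RG n (rk a) (rk b)"
proof -
  assume a: "a \<in> U" and b: "b \<in> U"
  have "rel (apply_interp pi_ev A) 0 [a] [b] \<longleftrightarrow> sat A (tup [a, b]) ev_efm"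
    unfolding pi_ev_def pi1_rel by simp
  also have "\<dots> \<longleftrightarrow> S2 a b \<or> S2 b a \<or> (a \<noteq> b \<and> ((\<not> (\<exists>d\<in>U. rel A 0 d a) \<and> \<not> (\<exists>d\<in>U. rel A 0 b d)) \<or>
       (\<not> (\<exists>d\<in>U. rel A 0 d b) \<and> \<not> (\<exists>d\<in>U. rel A 0 a d))))"
    unfolding ev_efm_def using S2_sat[of 0 1 "tup [a, b]"] S2_sat[of 1 0 "tup [a, b]"] by simp
  also have "\<dots> \<longleftrightarrow> RG n (rk a) (rk b)"
    unfolding RG_def using S2_iff[OF a b] S2_iff[OF b a] first_iff[OF a] first_iff[OF b]
      last_iff[OF a] last_iff[OF b] rk_eq_iff[OF a b] by auto
  finally show ?thesis .
qed

definition Pev :: "'a struc \<Rightarrow> bool" where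
  "Pev G \<longleftrightarrow> (\<exists>a\<in>univ G. \<exists>b\<in>univ G. a \<noteq> b) \<and> (\<forall>a\<in>univ G. \<forall>b\<in>univ G. (a, b) \<in> (edge_set G)\<^sup>*)"

lemma (in lo) Pev_iff: "Pev (apply_interp pi_ev A) \<longleftrightarrow> even n"
proof -
  define H where "H = apply_interp pi_ev A"
  have UH: "univ H = (\<lambda>x. [x]) ` U" unfolding H_def pi_ev_def by (rule pi1_univ)
  have relH: "rel H 0 [a] [b] \<longleftrightarrow> RG n (rk a) (rk b)" if "a \<in> U" "b \<in> U" for a b
    using ev_rel that unfolding H_def by blast
  have n1: "1 \<le> n" using fin ne by (simp add: Suc_leI card_gt_0_iff)
  have two: "(\<exists>a\<in>univ H. \<exists>b\<in>univ H. a \<noteq> b) \<longleftrightarrow> 2 \<le> n"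
  proof
    assume "\<exists>a\<in>univ H. \<exists>b\<in>univ H. a \<noteq> b"
    then obtain x y where "x \<in> U" "y \<in> U" "x \<noteq> y" unfolding UH by auto
    then have "card {x, y} \<le> n" "card {x, y} = 2" using card_mono[OF fin, of "{x, y}"] by auto
    then show "2 \<le> n" by simp
  next
    assume "2 \<le> n"
    then have "pre 0 \<in> U" "pre 1 \<in> U" "rk (pre 0) = 0" "rk (pre 1) = 1" using pre[of 0] pre[of 1] by auto
    then show "\<exists>a\<in>univ H. \<exists>b\<in>univ H. a \<noteq> b" unfolding UH by force
  qed
  have conn: "(\<forall>a\<in>univ H. \<forall>b\<in>univ H. (a, b) \<in> (edge_set H)\<^sup>*) \<longleftrightarrow>
      (\<forall>i<n. \<forall>j<n. (i, j) \<in> (edge_set (RGs n))\<^sup>*)"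
  proof
    assume h: "\<forall>a\<in>univ H. \<forall>b\<in>univ H. (a, b) \<in> (edge_set H)\<^sup>*"
    show "\<forall>i<n. \<forall>j<n. (i, j) \<in> (edge_set (RGs n))\<^sup>*"
    proof (intro allI impI)
      fix i j assume i: "i < n" and j: "j < n"
      have "([pre i], [pre j]) \<in> (edge_set H)\<^sup>*" using h pre[OF i] pre[OF j] unfolding UH by blast
      then have "((\<lambda>xs. rk (hd xs)) [pre i], (\<lambda>xs. rk (hd xs)) [pre j]) \<in> (edge_set (RGs n))\<^sup>*"
      proof (rule rtrancl_edge_map)
        fix x y assume x: "x \<in> univ H" and y: "y \<in> univ H" and r: "rel H 0 x y"
        obtain x0 y0 where "x = [x0]" "y = [y0]" "x0 \<in> U" "y0 \<in> U" using x y unfolding UH by auto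
        then show "rk (hd x) \<in> univ (RGs n) \<and> rk (hd y) \<in> univ (RGs n) \<and> rel (RGs n) 0 (rk (hd x)) (rk (hd y))"
          using r relH rk_lt_n unfolding RGs_def by auto
      qed
      then show "(i, j) \<in> (edge_set (RGs n))\<^sup>*" using pre[OF i] pre[OF j] by simp
    qed
  next
    assume h: "\<forall>i<n. \<forall>j<n. (i, j) \<in> (edge_set (RGs n))\<^sup>*"
    show "\<forall>a\<in>univ H. \<forall>b\<in>univ H. (a, b) \<in> (edge_set H)\<^sup>*"
    proof (intro ballI)
      fix a b assume a: "a \<in> univ H" and b: "b \<in> univ H"
      obtain x y where xy: "a = [x]" "b = [y]" "x \<in> U" "y \<in> U" using a b unfolding UH by auto
      have "(rk x, rk y) \<in> (edge_set (RGs n))\<^sup>*" using h rk_lt_n xy by blast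
      then have "((\<lambda>i. [pre i]) (rk x), (\<lambda>i. [pre i]) (rk y)) \<in> (edge_set H)\<^sup>*"
      proof (rule rtrancl_edge_map)
        fix i j assume i: "i \<in> univ (RGs n)" and j: "j \<in> univ (RGs n)" and r: "rel (RGs n) 0 i j"
        have i': "i < n" and j': "j < n" using i j unfolding RGs_def by auto
        show "[pre i] \<in> univ H \<and> [pre j] \<in> univ H \<and> rel H 0 [pre i] [pre j]"
          using pre[OF i'] pre[OF j'] r relH unfolding UH RGs_def by auto
      qed
      moreover have "pre (rk x) = x" "pre (rk y) = y"
        using pre[OF rk_lt_n[OF xy(3)]] pre[OF rk_lt_n[OF xy(4)]] rk_eq_iff xy by auto
      ultimately show "(a, b) \<in> (edge_set H)\<^sup>*" using xy by simp
    qed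
  qed
  show ?thesis unfolding H_def[symmetric] Pev_def using two conn RG_conn[OF n1] by blast
qed

definition phi_ev :: fm where
  "phi_ev = Conj (Exi 0 (Exi 1 (Neg (EqV 0 1)))) (Neg (Exi 0 (Exi 1 (Neg (SCf (V 0) (V 1) 2 3)))))"

lemma lo_of: "A \<in> linear_orders \<Longrightarrow> lo A"
  unfolding linear_orders_def lo_def by blast

lemma tid_ev: "tid (1, 0) linear_orders even_linear_orders"
proof (rule tid.basic, rule basic_tid_intro[where P = Pev and \<phi> = phi_ev and n = 0 and \<pi> = pi_ev])
  show "even_linear_orders \<subseteq> linear_orders" unfolding even_linear_orders_def by blast
  show "wf_interp (1, 0) 0 pi_ev"
    unfolding wf_interp_def pi_ev_def pi1_def ev_efm_def succ2f_def by auto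
  show "sentence (2, 0) phi_ev" unfolding sentence_def phi_ev_def by (auto simp: fv_SCf wf_SCf)
  show "\<forall>A\<in>linear_orders. interp_defined 0 pi_ev A \<and> is_npgraph 0 (apply_interp pi_ev A)"
  proof
    fix A assume A: "A \<in> linear_orders"
    interpret lo A using lo_of[OF A] .
    have U: "univ (apply_interp pi_ev A) = (\<lambda>x. [x]) ` U" unfolding pi_ev_def by (rule pi1_univ)
    have "is_npgraph 0 (apply_interp pi_ev A)"
      unfolding is_npgraph_def U using fin ne ev_rel by (auto simp: RG_def)
    then show "interp_defined 0 pi_ev A \<and> is_npgraph 0 (apply_interp pi_ev A)"
      unfolding interp_defined_def by simp
  qed
  fix G :: "'b list struc" and vs
  assume g: "is_npgraph 0 G" and tr: "is_traversal G vs"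
  have "models (expand G vs) phi_ev \<longleftrightarrow> sat (expand G vs) (\<lambda>_. undefined) phi_ev"
    by (rule models_sentence) (auto simp: phi_ev_def fv_SCf)
  also have "\<dots> \<longleftrightarrow> (\<exists>a\<in>univ G. \<exists>b\<in>univ G. a \<noteq> b) \<and> \<not> (\<exists>a\<in>univ G. \<exists>b\<in>univ G. \<not> conn_sem G vs a b)"
    unfolding phi_ev_def by (simp add: sat_SCf)
  also have "\<dots> \<longleftrightarrow> Pev G"
    unfolding Pev_def using conn_sem_iff[OF tr npgraph_gsym[OF g]] by blast
  finally show "models (expand G vs) phi_ev \<longleftrightarrow> Pev G" .
next
  show "\<forall>A\<in>linear_orders. (A \<in> even_linear_orders) = Pev (apply_interp pi_ev A)"
  proof
    fix A assume A: "A \<in> linear_orders"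
    interpret lo A using lo_of[OF A] .
    show "(A \<in> even_linear_orders) = Pev (apply_interp pi_ev A)"
      using Pev_iff A unfolding even_linear_orders_def by simp
  qed
qed

theorem lemma3:
  shows "tid (1, 2) pointed2_graphs st_conn \<and>
         tid (1, 0) finite_graphs acyclic_graphs \<and>
         tid (1, 0) finite_graphs bipartite_graphs \<and>
         tid (1, 0) linear_orders even_linear_orders"
  using tid_st tid_ac tid_bp tid_ev by blast

end
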